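(* Let $U\neq0$, $2\le k<\lfloor L/2\rfloor$, and let $F_k$ be a $k$-local conserved quantity of the one-dimensional Hubbard model. For $\sigma,\mu\in\{\uparrow,\downarrow\}$ and $s\in\{+,-\}$, let $q_i^{\sigma,s;\mu,s}$ denote the $k$-support basis element starting at site $i$ whose only non-identity factors are $e_{i,\sigma}=c^{s}_{i,\sigma}$ and $e_{i+k-1,\mu}=c^{s}_{i+k-1,\mu}$, where $c^+=c^\dagger$, $c^-=c$, and let $d_i$ be its coefficient in $F_k$. If $L$ is odd then $d_i=0$ for all $i$; if $L$ is even then there is a constant $d$ with $d_i=d\,(-1)^i$ for all $i$.
   Context: Fermionic operators $c_{j,\sigma},c^\dagger_{j,\sigma}$, $j\in\{1,\dots,L\}$ with indices modulo $L$ (periodic boundary conditions), $\sigma\in\{\uparrow,\downarrow\}$, with canonical anticommutation relations; $n_{j,\sigma}=c^\dagger_{j,\sigma}c_{j,\sigma}$, $z_{j,\sigma}=2n_{j,\sigma}-1$. Hubbard Hamiltonian: $H=-2\sum_j\sum_\sigma(c^\dagger_{j,\sigma}c_{j+1,\sigma}+c^\dagger_{j+1,\sigma}c_{j,\sigma})+4U\sum_j(n_{j,\uparrow}-\tfrac12)(n_{j,\downarrow}-\tfrac12)$. An $l$-support basis element starting at site $i$ is $(e_{i,\uparrow}\cdots e_{i+l-1,\uparrow})(e_{i,\downarrow}\cdots e_{i+l-1,\downarrow})$ (in exactly this operator order) with $e_{j,\sigma}\in\{c_{j,\sigma},c^\dagger_{j,\sigma},z_{j,\sigma},I\}$, $(e_{i,\uparrow},e_{i,\downarrow})\neq(I,I)$,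 $(e_{i+l-1,\uparrow},e_{i+l-1,\downarrow})\neq(I,I)$. A $k$-local conserved quantity is $F_k=\sum_{l=1}^k\sum_{i=1}^L\sum_e c_e\,e$ (inner sum over $l$-support basis elements starting at $i$) with $[F_k,H]=0$ and some nonzero coefficient on a $k$-support basis element. *)

theory Defs
  imports Complex_Main
begin

text \<open>Sites are 0..L-1 (site j of the
paper, j in 1..L, is j mod L). A mode is (site, spin) with spin True = up, False = down.
Fock basis states are sets of occupied modes. Operators are matrices indexed by
Fock basis states; all primitive operators vanish outside the Fock basis.\<close>

type_synonym mode = "nat \<times> bool"
type_synonym op = "mode set \<Rightarrow> mode set \<Rightarrow> complex"

definition modes :: "nat \<Rightarrow> mode set" where
  "modes L = {0..<L} \<times> (UNIV :: bool set)"

definition states :: "nat \<Rightarrow> mode set set" where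
  "states L = Pow (modes L)"

definition jw :: "mode \<Rightarrow> nat" where
  "jw m = 2 * fst m + (if snd m then 0 else 1)"

definition jwsign :: "mode \<Rightarrow> mode set \<Rightarrow> complex" where
  "jwsign m y = (-1) ^ card {m' \<in> y. jw m' < jw m}"

definition idop :: "nat \<Rightarrow> op" where
  "idop L x y = (if x \<in> states L \<and> x = y then 1 else 0)"

definition ann :: "nat \<Rightarrow> mode \<Rightarrow> op" where
  "ann L m x y = (if x \<in> states L \<and> y \<in> states L \<and> m \<in> y \<and> x = y - {m}
                  then jwsign m y else 0)"

definition cre :: "nat \<Rightarrow> mode \<Rightarrow> op" where
  "cre L m x y = (if x \<in> states L \<and> y \<in> states L \<and> m \<notin> y \<and> x = insert m y
                  then jwsign m y else 0)"

definition opmult :: "nat \<Rightarrow> op \<Rightarrow> op \<Rightarrow> op" where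
  "opmult L A B x y = (\<Sum>z\<in>states L. A x z * B z y)"

definition opadd :: "op \<Rightarrow> op \<Rightarrow> op" where
  "opadd A B x y = A x y + B x y"

definition opsmult :: "complex \<Rightarrow> op \<Rightarrow> op" where
  "opsmult a A x y = a * A x y"

definition numop :: "nat \<Rightarrow> mode \<Rightarrow> op" where
  "numop L m = opmult L (cre L m) (ann L m)"

definition zop :: "nat \<Rightarrow> mode \<Rightarrow> op" where
  "zop L m = opadd (opsmult 2 (numop L m)) (opsmult (-1) (idop L))"

definition oplist :: "nat \<Rightarrow> op list \<Rightarrow> op" where
  "oplist L ops = foldr (opmult L) ops (idop L)"

definition site :: "nat \<Rightarrow> nat \<Rightarrow> nat" where
  "site L j = j mod L"

definition hub :: "nat \<Rightarrow> real \<Rightarrow> op" where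
  "hub L U x y =
     -2 * (\<Sum>j\<in>{1..L}. \<Sum>\<sigma>\<in>(UNIV::bool set).
            opmult L (cre L (site L j, \<sigma>)) (ann L (site L (j+1), \<sigma>)) x y
          + opmult L (cre L (site L (j+1), \<sigma>)) (ann L (site L j, \<sigma>)) x y)
     + 4 * complex_of_real U * (\<Sum>j\<in>{1..L}.
            opmult L (opadd (numop L (site L j, True)) (opsmult (-1/2) (idop L)))
                     (opadd (numop L (site L j, False)) (opsmult (-1/2) (idop L))) x y)"

datatype fac = FI | FC | FD | FZ

definition facop :: "nat \<Rightarrow> fac \<Rightarrow> mode \<Rightarrow> op" where
  "facop L f m = (case f of FI \<Rightarrow> idop L | FC \<Rightarrow> ann L m | FD \<Rightarrow> cre L m | FZ \<Rightarrow> zop L m)"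

text \<open>A configuration of length l is the list of pairs (e_{i+r,up}, e_{i+r,down}), r = 0..l-1.
The basis element is (e_{i,up} ... e_{i+l-1,up})(e_{i,down} ... e_{i+l-1,down}).\<close>
definition belem :: "nat \<Rightarrow> nat \<Rightarrow> (fac \<times> fac) list \<Rightarrow> op" where
  "belem L i cfg = opmult L
     (oplist L (map (\<lambda>r. facop L (fst (cfg ! r)) (site L (i + r), True)) [0..<length cfg]))
     (oplist L (map (\<lambda>r. facop L (snd (cfg ! r)) (site L (i + r), False)) [0..<length cfg]))"

definition cfgs :: "nat \<Rightarrow> (fac \<times> fac) list set" where
  "cfgs l = {cfg. length cfg = l \<and> 1 \<le> l \<and> hd cfg \<noteq> (FI, FI) \<and> last cfg \<noteq> (FI, FI)}"

definition Fk :: "nat \<Rightarrow> nat \<Rightarrow> (nat \<Rightarrow> nat \<Rightarrow> (fac \<times> fac) list \<Rightarrow> complex) \<Rightarrow> op" where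
  "Fk L k coef x y = (\<Sum>l\<in>{1..k}. \<Sum>i\<in>{1..L}. \<Sum>cfg\<in>cfgs l. coef l i cfg * belem L i cfg x y)"

text \<open>The configuration of q_i^{sigma,s;mu,s}: c^s at (i,sigma), c^s at (i+k-1,mu), identity
elsewhere. s = True means c^+ = c^dagger, s = False means c^- = c.\<close>
definition qcfg :: "nat \<Rightarrow> bool \<Rightarrow> bool \<Rightarrow> bool \<Rightarrow> (fac \<times> fac) list" where
  "qcfg k \<sigma> \<mu> s =
     (let f = (if s then FD else FC) in
      (if \<sigma> then (f, FI) else (FI, f)) # replicate (k - 2) (FI, FI)
        @ [if \<mu> then (f, FI) else (FI, f)])"

end

theory Submission
  imports Defs
begin

definition good :: "nat \<Rightarrow> op \<Rightarrow> bool" where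
  "good L A \<longleftrightarrow> (\<forall>x y. A x y \<noteq> 0 \<longrightarrow> x \<in> states L \<and> y \<in> states L)"

lemma finite_modes: "finite (modes L)" unfolding modes_def by auto
lemma finite_states: "finite (states L)" unfolding states_def by (simp add: finite_modes)
lemma states_finite: "x \<in> states L \<Longrightarrow> finite x"
  unfolding states_def using finite_modes finite_subset by auto

lemma jw_inj: "jw a = jw b \<Longrightarrow> a = b"
  unfolding jw_def by (cases a; cases b) (auto split: if_splits; presburger)

lemma jwsign_insert:
  assumes "finite y" "b \<notin> y"
  shows "jwsign a (insert b y) = (if jw b < jw a then -1 else 1) * jwsign a y"
proof (cases "jw b < jw a")
  case True
  have "{m' \<in> insert b y. jw m' < jw a} = insert b {m' \<in> y. jw m' < jw a}" using True by auto
  moreover have "card (insert b {m' \<in> y. jw m' < jw a}) = Suc (card {m' \<in> y. jw m' < jw a})"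
    using assms by simp
  ultimately show ?thesis using True unfolding jwsign_def by simp
next
  case False
  have "{m' \<in> insert b y. jw m' < jw a} = {m' \<in> y. jw m' < jw a}" using False by auto
  then show ?thesis using False unfolding jwsign_def by simp
qed

lemma jwsign_sq: "jwsign a y * jwsign a y = 1"
  unfolding jwsign_def by (simp add: power_mult_distrib[symmetric])

lemma jwsign_ne0: "jwsign a y \<noteq> 0" unfolding jwsign_def by simp

lemma opmult_assoc: "opmult L (opmult L A B) C = opmult L A (opmult L B C)"
  unfolding opmult_def
  by (auto intro!: ext simp: sum_distrib_left sum_distrib_right mult.assoc intro: sum.swap)

lemma good_opmult: "good L A \<Longrightarrow> good L B \<Longrightarrow> good L (opmult L A B)"
  unfolding good_def opmult_def by (metis (mono_tags, lifting) mult_eq_0_iff sum.neutral)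

lemma good_cre: "good L (cre L m)" unfolding good_def cre_def by auto
lemma good_ann: "good L (ann L m)" unfolding good_def ann_def by auto
lemma good_idop: "good L (idop L)" unfolding good_def idop_def by auto
lemma good_numop: "good L (numop L m)" unfolding numop_def by (intro good_opmult good_cre good_ann)
lemma good_zop: "good L (zop L m)"
  using good_numop[of L m] good_idop[of L] unfolding good_def zop_def opadd_def opsmult_def
  by (metis add.right_neutral mult_zero_right)
lemma good_facop: "good L (facop L f m)"
  by (cases f) (simp_all add: facop_def good_cre good_ann good_idop good_zop)

lemma idop_left: "good L B \<Longrightarrow> opmult L (idop L) B = B"
proof (intro ext)
  fix x y assume g: "good L B"
  have "opmult L (idop L) B x y = (\<Sum>z\<in>states L. if z = x then (if x \<in> states L then B x y else 0) else 0)"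
    unfolding opmult_def idop_def by (rule sum.cong) auto
  also have "\<dots> = B x y" using g unfolding good_def by (simp add: finite_states) blast
  finally show "opmult L (idop L) B x y = B x y" .
qed

lemma idop_right: "good L B \<Longrightarrow> opmult L B (idop L) = B"
proof (intro ext)
  fix x y assume g: "good L B"
  have "opmult L B (idop L) x y = (\<Sum>z\<in>states L. if z = y then (if y \<in> states L then B x y else 0) else 0)"
    unfolding opmult_def idop_def by (rule sum.cong) auto
  also have "\<dots> = B x y" using g unfolding good_def by (simp add: finite_states) blast
  finally show "opmult L B (idop L) x y = B x y" .
qed

lemma sum_single:
  assumes "finite S" "\<And>z. z \<in> S \<Longrightarrow> z \<noteq> c \<Longrightarrow> f z = 0"
  shows "sum f S = (if c \<in> S then f c else 0)"
proof -
  have "sum f S = (\<Sum>z\<in>S. if z = c then f c else 0)"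
    using assms(2) by (intro sum.cong) auto
  then show ?thesis using assms(1) by simp
qed

lemma opmult_cre_right:
  "opmult L A (cre L m) x y = (if insert m y \<in> states L \<and> y \<in> states L \<and> m \<notin> y then A x (insert m y) * jwsign m y else 0)"
  unfolding opmult_def
  by (subst sum_single[where c="insert m y"]) (auto simp: finite_states cre_def)

lemma opmult_ann_right:
  "opmult L A (ann L m) x y = (if y - {m} \<in> states L \<and> y \<in> states L \<and> m \<in> y then A x (y - {m}) * jwsign m y else 0)"
  unfolding opmult_def
  by (subst sum_single[where c="y - {m}"]) (auto simp: finite_states ann_def)

lemma cre_def2: "cre L m x y = (if x \<in> states L \<and> y \<in> states L \<and> m \<notin> y \<and> x = insert m y then jwsign m y else 0)"
  by (simp add: cre_def)
lemma ann_def2: "ann L m x y = (if x \<in> states L \<and> y \<in> states L \<and> m \<in> y \<and> x = y - {m} then jwsign m y else 0)"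
  by (simp add: ann_def)

lemma states_insert: "x \<in> states L \<Longrightarrow> insert a y \<in> states L \<Longrightarrow> y \<in> states L"
  by (auto simp: states_def)

lemma cre_cre: "opmult L (cre L a) (cre L b) x y = - opmult L (cre L b) (cre L a) x y"
proof (cases "x \<in> states L \<and> y \<in> states L \<and> a \<notin> y \<and> b \<notin> y \<and> a \<noteq> b \<and> x = insert a (insert b y)")
  case True
  then have f: "finite y" using states_finite by auto
  have ab: "jw a \<noteq> jw b" using True jw_inj by metis
  have s1: "insert b y \<in> states L" "insert a y \<in> states L" "insert b (insert a y) \<in> states L" using True by (auto simp: states_def)
  have "opmult L (cre L a) (cre L b) x y = jwsign a (insert b y) * jwsign b y"
    unfolding opmult_cre_right cre_def2 using True s1 by auto
  moreover have "opmult L (cre L b) (cre L a) x y = jwsign b (insert a y) * jwsign a y"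
    unfolding opmult_cre_right cre_def2 using True s1 by (auto simp: insert_commute)
  ultimately show ?thesis using True f ab by (simp add: jwsign_insert)
next
  case False
  have "opmult L (cre L a) (cre L b) x y = 0"
    unfolding opmult_cre_right cre_def2 using False by (auto simp: insert_commute)
  moreover have "opmult L (cre L b) (cre L a) x y = 0"
    unfolding opmult_cre_right cre_def2 using False by (auto simp: insert_commute)
  ultimately show ?thesis by simp
qed

lemma ann_cre:
  assumes "a \<in> modes L"
  shows "opmult L (ann L a) (cre L b) x y = (if a = b then idop L x y else 0) - opmult L (cre L b) (ann L a) x y"
proof (cases "a = b")
  case True
  have "opmult L (ann L a) (cre L a) x y = (if x \<in> states L \<and> y \<in> states L \<and> a \<notin> y \<and> x = y then 1 else 0)"
  proof (cases "y \<in> states L \<and> a \<notin> y")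
    case c: True
    then have "insert a y \<in> states L" using assms by (auto simp: states_def)
    then show ?thesis unfolding opmult_cre_right ann_def2 using c
      by (auto simp: jwsign_sq jwsign_insert states_finite)
  qed (auto simp: opmult_cre_right ann_def2)
  moreover have "opmult L (cre L a) (ann L a) x y = (if x \<in> states L \<and> y \<in> states L \<and> a \<in> y \<and> x = y then 1 else 0)"
  proof (cases "y \<in> states L \<and> a \<in> y")
    case c: True
    then have "y - {a} \<in> states L" by (auto simp: states_def)
    moreover have "jwsign a (y - {a}) = jwsign a y"
      using jwsign_insert[of "y - {a}" a a] c states_finite[of y L] by (simp add: insert_absorb)
    ultimately show ?thesis unfolding opmult_ann_right cre_def2 using c
      by (auto simp: jwsign_sq insert_absorb)
  qed (auto simp: opmult_ann_right cre_def2)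
  ultimately show ?thesis using True unfolding idop_def by auto
next
  case False
  show ?thesis
  proof (cases "x \<in> states L \<and> y \<in> states L \<and> a \<in> y \<and> b \<notin> y \<and> x = insert b y - {a}")
    case True
    then have f: "finite y" using states_finite by auto
    have ab: "jw a \<noteq> jw b" using False jw_inj by metis
    have s1: "insert b y \<in> states L" "y - {a} \<in> states L" using True by (auto simp: states_def)
    have j1: "jwsign a y = (if jw b < jw a then -1 else 1) * jwsign a (insert b y)"
      using jwsign_insert[of y b a] True f by (simp add: jwsign_sq)
    have j2: "jwsign b y = (if jw a < jw b then -1 else 1) * jwsign b (y - {a})"
      using jwsign_insert[of "y - {a}" a b] True f by (simp add: insert_absorb)
    have "opmult L (ann L a) (cre L b) x y = jwsign a (insert b y) * jwsign b y"
      unfolding opmult_cre_right ann_def2 using True s1 False by auto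
    moreover have "opmult L (cre L b) (ann L a) x y = jwsign b (y - {a}) * jwsign a y"
      unfolding opmult_ann_right cre_def2 using True s1 False by (auto simp: insert_Diff_if)
    ultimately show ?thesis using ab False j1 j2 by auto
  next
    case c: False
    have "opmult L (ann L a) (cre L b) x y = 0"
      unfolding opmult_cre_right ann_def2 using c False by auto
    moreover have "opmult L (cre L b) (ann L a) x y = 0"
      unfolding opmult_ann_right cre_def2 using c False by auto
    ultimately show ?thesis using False by simp
  qed
qed

definition optr :: "op \<Rightarrow> op" where "optr M x y = M y x"

lemma jwsign_self_insert: "jwsign m (insert m x) = jwsign m x"
proof -
  have "{m' \<in> insert m x. jw m' < jw m} = {m' \<in> x. jw m' < jw m}" by auto
  then show ?thesis by (simp add: jwsign_def)
qed

lemma jwsign_self_remove: "jwsign m (x - {m}) = jwsign m x"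
  by (metis insert_Diff_single jwsign_self_insert)

lemma optr_cre: "optr (cre L m) = ann L m"
proof (intro ext)
  fix x y
  show "optr (cre L m) x y = ann L m x y"
  proof (cases "x \<in> states L \<and> y \<in> states L \<and> m \<in> y \<and> x = y - {m}")
    case True
    then have "y = insert m x" "m \<notin> x" by auto
    then show ?thesis unfolding optr_def cre_def2 ann_def2 using True jwsign_self_insert[of m x] by simp
  next
    case False
    then show ?thesis unfolding optr_def cre_def2 ann_def2 by auto
  qed
qed

lemma optr_optr: "optr (optr M) = M" by (intro ext) (simp add: optr_def)

lemma optr_ann: "optr (ann L m) = cre L m"
  using optr_optr[of "cre L m"] by (simp add: optr_cre)

lemma optr_opmult: "optr (opmult L A B) = opmult L (optr B) (optr A)"
  by (intro ext) (simp add: optr_def opmult_def mult.commute)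

lemma ann_ann: "opmult L (ann L a) (ann L b) x y = - opmult L (ann L b) (ann L a) x y"
proof -
  have "opmult L (ann L a) (ann L b) x y = optr (opmult L (cre L b) (cre L a)) x y"
    by (simp add: optr_opmult optr_cre)
  also have "\<dots> = - opmult L (cre L a) (cre L b) y x" unfolding optr_def by (rule cre_cre)
  also have "\<dots> = - optr (opmult L (cre L a) (cre L b)) x y" by (simp add: optr_def)
  also have "\<dots> = - opmult L (ann L b) (ann L a) x y" by (simp add: optr_opmult optr_cre)
  finally show ?thesis .
qed

lemma opmult_diff_right: "opmult L A (\<lambda>x y. B x y - C x y) x y = opmult L A B x y - opmult L A C x y"
  by (simp add: opmult_def algebra_simps sum_subtractf)
lemma opmult_diff_left: "opmult L (\<lambda>x y. B x y - C x y) A x y = opmult L B A x y - opmult L C A x y"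
  by (simp add: opmult_def algebra_simps sum_subtractf)
lemma opmult_scale_right: "opmult L A (\<lambda>x y. c * B x y) x y = c * opmult L A B x y"
  by (simp add: opmult_def algebra_simps sum_distrib_left)
lemma opmult_scale_left: "opmult L (\<lambda>x y. c * B x y) A x y = c * opmult L B A x y"
  by (simp add: opmult_def algebra_simps sum_distrib_left)
lemma opmult_if_right: "opmult L A (\<lambda>x y. if c then B x y else 0) x y = (if c then opmult L A B x y else 0)"
  by (simp add: opmult_def)
lemma opmult_if_left: "opmult L (\<lambda>x y. if c then B x y else 0) A x y = (if c then opmult L B A x y else 0)"
  by (simp add: opmult_def)

lemma ann_cre_op: "a \<in> modes L \<Longrightarrow>
  opmult L (ann L a) (cre L b) = (\<lambda>x y. (if a = b then idop L x y else 0) - opmult L (cre L b) (ann L a) x y)"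
  by (intro ext) (rule ann_cre)

lemma ann_cre_nested:
  assumes "a \<in> modes L" "good L M"
  shows "opmult L (ann L a) (opmult L (cre L b) M) x y = (if a = b then M x y else 0) - opmult L (cre L b) (opmult L (ann L a) M) x y"
proof -
  have "opmult L (ann L a) (opmult L (cre L b) M) x y = opmult L (opmult L (ann L a) (cre L b)) M x y"
    by (simp add: opmult_assoc)
  also have "\<dots> = opmult L (\<lambda>x y. (if a = b then idop L x y else 0) - opmult L (cre L b) (ann L a) x y) M x y"
    using ann_cre_op[OF assms(1)] by simp
  also have "\<dots> = (if a = b then opmult L (idop L) M x y else 0) - opmult L (opmult L (cre L b) (ann L a)) M x y"
    by (simp add: opmult_diff_left opmult_if_left)
  also have "\<dots> = (if a = b then M x y else 0) - opmult L (cre L b) (opmult L (ann L a) M) x y"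
    using idop_left[OF assms(2)] by (simp add: opmult_assoc)
  finally show ?thesis .
qed

lemma cre_cre_nested: "opmult L (cre L a) (opmult L (cre L b) M) x y = - opmult L (cre L b) (opmult L (cre L a) M) x y"
proof -
  have "opmult L (cre L a) (opmult L (cre L b) M) x y = opmult L (opmult L (cre L a) (cre L b)) M x y"
    by (simp add: opmult_assoc)
  also have "opmult L (cre L a) (cre L b) = (\<lambda>x y. (-1) * opmult L (cre L b) (cre L a) x y)"
    by (intro ext) (subst cre_cre, simp)
  also have "opmult L (\<lambda>x y. (-1) * opmult L (cre L b) (cre L a) x y) M x y = - opmult L (cre L b) (opmult L (cre L a) M) x y"
    by (simp only: opmult_scale_left opmult_assoc) simp
  finally show ?thesis .
qed

lemma ann_ann_nested: "opmult L (ann L a) (opmult L (ann L b) M) x y = - opmult L (ann L b) (opmult L (ann L a) M) x y"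
proof -
  have "opmult L (ann L a) (opmult L (ann L b) M) x y = opmult L (opmult L (ann L a) (ann L b)) M x y"
    by (simp add: opmult_assoc)
  also have "opmult L (ann L a) (ann L b) = (\<lambda>x y. (-1) * opmult L (ann L b) (ann L a) x y)"
    by (intro ext) (subst ann_ann, simp)
  also have "opmult L (\<lambda>x y. (-1) * opmult L (ann L b) (ann L a) x y) M x y = - opmult L (ann L b) (opmult L (ann L a) M) x y"
    by (simp only: opmult_scale_left opmult_assoc) simp
  finally show ?thesis .
qed

lemma comm_cre:
  assumes "a \<in> modes L"
  shows "opmult L (opmult L (cre L P) (cre L R)) (opmult L (cre L b) (ann L a)) x y
       - opmult L (opmult L (cre L b) (ann L a)) (opmult L (cre L P) (cre L R)) x y
       = (if a = R then opmult L (cre L b) (cre L P) x y else 0) - (if a = P then opmult L (cre L b) (cre L R) x y else 0)"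
proof -
  have g: "good L (cre L R)" by (rule good_cre)
  have e1: "opmult L (ann L a) (opmult L (cre L P) (cre L R)) = (\<lambda>x y. (if a = P then cre L R x y else 0) - opmult L (cre L P) (opmult L (ann L a) (cre L R)) x y)"
    by (intro ext) (rule ann_cre_nested[OF assms g])
  have e2: "opmult L (cre L P) (opmult L (ann L a) (cre L R)) = (\<lambda>x y. (if a = R then cre L P x y else 0) - opmult L (cre L P) (opmult L (cre L R) (ann L a)) x y)"
    apply (intro ext)
    apply (subst ann_cre_op[OF assms])
    apply (simp only: opmult_diff_right opmult_if_right idop_right[OF good_cre])
    done
  have XA: "opmult L (opmult L (cre L b) (ann L a)) (opmult L (cre L P) (cre L R)) x y
     = (if a = P then opmult L (cre L b) (cre L R) x y else 0) - ((if a = R then opmult L (cre L b) (cre L P) x y else 0)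
        - opmult L (cre L b) (opmult L (cre L P) (opmult L (cre L R) (ann L a))) x y)"
    apply (simp only: opmult_assoc e1 opmult_diff_right opmult_if_right)
    apply (simp only: e2 opmult_diff_right opmult_if_right)
    done
  have AX: "opmult L (opmult L (cre L P) (cre L R)) (opmult L (cre L b) (ann L a)) x y
     = opmult L (cre L b) (opmult L (cre L P) (opmult L (cre L R) (ann L a))) x y"
  proof -
    have f: "opmult L (cre L R) (opmult L (cre L b) (ann L a)) = (\<lambda>x y. (-1) * opmult L (cre L b) (opmult L (cre L R) (ann L a)) x y)"
      by (intro ext) (subst cre_cre_nested[of L R b], simp)
    show ?thesis
      apply (simp only: opmult_assoc f opmult_scale_right)
      apply (subst cre_cre_nested[of L P b])
      apply simp
      done
  qed
  have alg: "\<And>C A B::complex. C - (A - (B - C)) = B - A" by simp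
  show ?thesis unfolding XA AX by (rule alg)
qed

lemma comm_ann:
  assumes "P \<in> modes L" "R \<in> modes L"
  shows "opmult L (opmult L (ann L P) (ann L R)) (opmult L (cre L b) (ann L a)) x y
       - opmult L (opmult L (cre L b) (ann L a)) (opmult L (ann L P) (ann L R)) x y
       = (if b = R then opmult L (ann L P) (ann L a) x y else 0) - (if b = P then opmult L (ann L R) (ann L a) x y else 0)"
proof -
  have e1: "opmult L (ann L R) (opmult L (cre L b) (ann L a)) = (\<lambda>x y. (if R = b then ann L a x y else 0) - opmult L (cre L b) (opmult L (ann L R) (ann L a)) x y)"
    by (intro ext) (rule ann_cre_nested[OF assms(2) good_ann])
  have e2: "opmult L (ann L P) (opmult L (cre L b) (opmult L (ann L R) (ann L a))) = (\<lambda>x y. (if P = b then opmult L (ann L R) (ann L a) x y else 0) - opmult L (cre L b) (opmult L (ann L P) (opmult L (ann L R) (ann L a))) x y)"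
    by (intro ext) (rule ann_cre_nested[OF assms(1) good_opmult[OF good_ann good_ann]])
  have AX: "opmult L (opmult L (ann L P) (ann L R)) (opmult L (cre L b) (ann L a)) x y
     = (if R = b then opmult L (ann L P) (ann L a) x y else 0) - ((if P = b then opmult L (ann L R) (ann L a) x y else 0)
        - opmult L (cre L b) (opmult L (ann L P) (opmult L (ann L R) (ann L a))) x y)"
    apply (simp only: opmult_assoc e1 opmult_diff_right opmult_if_right)
    apply (simp only: e2 opmult_diff_right opmult_if_right)
    done
  have XA: "opmult L (opmult L (cre L b) (ann L a)) (opmult L (ann L P) (ann L R)) x y
     = opmult L (cre L b) (opmult L (ann L P) (opmult L (ann L R) (ann L a))) x y"
  proof -
    have f1: "opmult L (ann L a) (ann L R) = (\<lambda>x y. (-1) * opmult L (ann L R) (ann L a) x y)"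
      by (intro ext) (subst ann_ann, simp)
    have f2: "opmult L (ann L a) (opmult L (ann L P) (ann L R)) = (\<lambda>x y. (-1) * opmult L (ann L P) (opmult L (ann L a) (ann L R)) x y)"
      by (intro ext) (subst ann_ann_nested, simp)
    show ?thesis
      apply (simp only: opmult_assoc f2 opmult_scale_right f1)
      apply simp
      done
  qed
  have alg: "\<And>C A B::complex. (B - (A - C)) - C = B - A" by simp
  show ?thesis unfolding XA AX using alg by (simp add: eq_commute[of b])
qed

definition opl :: "nat \<Rightarrow> (fac \<times> mode) list \<Rightarrow> op" where
  "opl L fl = oplist L (map (\<lambda>(f,m). facop L f m) fl)"
definition Dset :: "(fac \<times> mode) list \<Rightarrow> mode set" where "Dset fl = {m. (FD,m) \<in> set fl}"
definition Cset :: "(fac \<times> mode) list \<Rightarrow> mode set" where "Cset fl = {m. (FC,m) \<in> set fl}"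
definition Zset :: "(fac \<times> mode) list \<Rightarrow> mode set" where "Zset fl = {m. (FZ,m) \<in> set fl}"
definition eraseZ :: "(fac \<times> mode) list \<Rightarrow> (fac \<times> mode) list" where
  "eraseZ fl = map (\<lambda>(f,m). (if f = FZ then FI else f, m)) fl"
definition zval :: "mode \<Rightarrow> mode set \<Rightarrow> complex" where "zval m y = (if m \<in> y then 1 else -1)"

lemma opl_Nil: "opl L [] = idop L" by (simp add: opl_def oplist_def)
lemma opl_Cons: "opl L ((f,m)#fl) = opmult L (facop L f m) (opl L fl)" by (simp add: opl_def oplist_def)

lemma good_opl: "good L (opl L fl)"
  by (induction fl) (auto simp: opl_Nil opl_Cons good_idop intro!: good_opmult good_facop)

lemma opl_append: "opl L (xs @ ys) = opmult L (opl L xs) (opl L ys)"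
  by (induction xs) (auto simp: opl_Nil opl_Cons idop_left good_opl opmult_assoc)

lemma numop_eq: "numop L m x y = (if x \<in> states L \<and> y \<in> states L \<and> m \<in> y \<and> x = y then 1 else 0)"
proof (cases "y \<in> states L \<and> m \<in> y")
  case True
  then have "y - {m} \<in> states L" by (auto simp: states_def)
  then show ?thesis unfolding numop_def opmult_ann_right cre_def2 using True
    by (auto simp: jwsign_self_remove jwsign_sq insert_absorb)
qed (auto simp: numop_def opmult_ann_right)

lemma zop_eq: "zop L m x y = (if x \<in> states L \<and> x = y then zval m y else 0)"
  unfolding zop_def opadd_def opsmult_def numop_eq idop_def zval_def by auto

lemma idop_eq: "idop L x y = (if x \<in> states L \<and> x = y then 1 else 0)"
  unfolding idop_def by auto

lemma sum_nonzero: "sum f S \<noteq> 0 \<Longrightarrow> \<exists>z\<in>S. f z \<noteq> 0"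
  by (meson sum.neutral)

lemma opl_shape:
  assumes "distinct (map snd fl)" "opl L fl x y \<noteq> 0"
  shows "x - y = Dset fl \<and> y - x = Cset fl"
  using assms
proof (induction fl arbitrary: x)
  case Nil
  then show ?case by (auto simp: opl_Nil idop_def Dset_def Cset_def split: if_splits)
next
  case (Cons p fl)
  obtain f m where p: "p = (f, m)" by (cases p)
  have "(\<Sum>z\<in>states L. facop L f m x z * opl L fl z y) \<noteq> 0"
    using Cons.prems(2) unfolding p opl_Cons opmult_def .
  then obtain z where "facop L f m x z * opl L fl z y \<noteq> 0" using sum_nonzero by blast
  then have z: "facop L f m x z \<noteq> 0" "opl L fl z y \<noteq> 0" by auto
  have dist: "distinct (map snd fl)" and mn: "m \<notin> snd ` set fl" using Cons.prems p by auto
  from Cons.IH[OF dist z(2)] have ih: "z - y = Dset fl" "y - z = Cset fl" by auto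
  have mD: "m \<notin> Dset fl" "m \<notin> Cset fl" using mn unfolding Dset_def Cset_def by force+
  show ?case
  proof (cases f)
    case FI
    then have "x = z" using z(1) by (auto simp: facop_def idop_def split: if_splits)
    then show ?thesis using ih FI p unfolding Dset_def Cset_def by auto
  next
    case FZ
    then have "x = z" using z(1) by (auto simp: facop_def zop_eq split: if_splits)
    then show ?thesis using ih FZ p unfolding Dset_def Cset_def by auto
  next
    case FD
    then have "x = insert m z" "m \<notin> z" using z(1) by (auto simp: facop_def cre_def split: if_splits)
    moreover have "Dset (p # fl) = insert m (Dset fl)" "Cset (p # fl) = Cset fl"
      using FD p unfolding Dset_def Cset_def by auto
    ultimately show ?thesis using ih mD by (simp only:) blast
  next
    case FC
    then have "x = z - {m}" "m \<in> z" using z(1) by (auto simp: facop_def ann_def split: if_splits)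
    moreover have "Dset (p # fl) = Dset fl" "Cset (p # fl) = insert m (Cset fl)"
      using FC p unfolding Dset_def Cset_def by auto
    ultimately show ?thesis using ih mD by (simp only:) blast
  qed
qed

lemma opl_FI: "opl L ((FI,m)#fl) = opl L fl"
  by (simp add: opl_Cons facop_def idop_left good_opl)

lemma opl_filter: "opl L fl = opl L (filter (\<lambda>p. fst p \<noteq> FI) fl)"
proof (induction fl)
  case (Cons p fl)
  then show ?case by (cases p) (auto simp: opl_Cons opl_FI[unfolded opl_Cons])
qed simp

lemma opl_eraseZ:
  assumes "distinct (map snd fl)"
  shows "opl L fl x y = opl L (eraseZ fl) x y * (\<Prod>m\<in>Zset fl. zval m y)"
  using assms
proof (induction fl arbitrary: x)
  case Nil
  then show ?case by (simp add: eraseZ_def Zset_def)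
next
  case (Cons p fl)
  obtain f m where p: "p = (f, m)" by (cases p)
  have dist: "distinct (map snd fl)" and mn: "m \<notin> snd ` set fl" using Cons.prems p by auto
  have finZ: "finite (Zset fl)" unfolding Zset_def
    by (rule finite_subset[of _ "snd ` set fl"]) force+
  have mZ: "m \<notin> Zset fl" using mn unfolding Zset_def by force
  show ?case
  proof (cases "f = FZ")
    case True
    have e1: "opl L (p # fl) x y = (if x \<in> states L then zval m x * opl L fl x y else 0)"
      unfolding p True opl_Cons opmult_def facop_def fac.case zop_eq
      by (subst sum_single[where c=x]) (auto simp: finite_states)
    have e2: "opl L (p # fl) x y = zval m x * opl L fl x y"
      using e1 good_opl[of L fl] unfolding good_def by auto
    have er: "eraseZ (p # fl) = (FI, m) # eraseZ fl" using p True by (simp add: eraseZ_def)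
    have zs: "Zset (p # fl) = insert m (Zset fl)" using p True unfolding Zset_def by auto
    show ?thesis
    proof (cases "opl L fl x y = 0")
      case True
      then have h: "opl L (eraseZ fl) x y * (\<Prod>m\<in>Zset fl. zval m y) = 0" using Cons.IH[OF dist, of x] by simp
      have "opl L (eraseZ (p # fl)) x y * (\<Prod>m\<in>Zset (p # fl). zval m y)
          = zval m y * (opl L (eraseZ fl) x y * (\<Prod>m\<in>Zset fl. zval m y))"
        by (simp add: er opl_FI zs finZ mZ)
      then show ?thesis using h e2 True by simp
    next
      case False
      from opl_shape[OF dist False] have "x - y = Dset fl" "y - x = Cset fl" by auto
      moreover have "m \<notin> Dset fl" "m \<notin> Cset fl" using mn unfolding Dset_def Cset_def by force+
      ultimately have "m \<notin> x - y" "m \<notin> y - x" by simp_all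
      then have "(m \<in> x) = (m \<in> y)" by blast
      then have "zval m x = zval m y" unfolding zval_def by simp
      then show ?thesis using e2 Cons.IH[OF dist, of x] finZ mZ by (simp add: er opl_FI zs)
    qed
  next
    case False
    have er: "eraseZ (p # fl) = (f, m) # eraseZ fl" using p False by (simp add: eraseZ_def)
    have zs: "Zset (p # fl) = Zset fl" using p False unfolding Zset_def by auto
    show ?thesis
      unfolding er zs unfolding p opl_Cons opmult_def
      by (simp add: Cons.IH[OF dist] sum_distrib_right mult.assoc)
  qed
qed

definition belist :: "nat \<Rightarrow> nat \<Rightarrow> (fac \<times> fac) list \<Rightarrow> (fac \<times> mode) list" where
  "belist L i cfg = map (\<lambda>r. (fst (cfg ! r), (site L (i + r), True))) [0..<length cfg]
                  @ map (\<lambda>r. (snd (cfg ! r), (site L (i + r), False))) [0..<length cfg]"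

lemma belem_opl: "belem L i cfg = opl L (belist L i cfg)"
  unfolding belem_def belist_def opl_append by (simp add: opl_def o_def)

definition ip :: "nat \<Rightarrow> op \<Rightarrow> op \<Rightarrow> complex" where
  "ip L A B = (\<Sum>x\<in>states L. \<Sum>y\<in>states L. A x y * B x y)"

lemma set_decomp: "z - y = D \<Longrightarrow> y - z = C \<Longrightarrow> z = (y - C) \<union> D"
  by blast

lemma sq4: "(a::complex)*a = 1 \<Longrightarrow> b*b = 1 \<Longrightarrow> a*b*(a*b) = 1"
proof -
  assume "a*a = 1" "b*b = 1"
  moreover have "a*b*(a*b) = (a*a)*(b*b)" by (simp add: mult_ac)
  ultimately show ?thesis by simp
qed

lemma opl_sq:
  assumes "distinct (map snd fl)" "snd ` set fl \<subseteq> modes L" "u \<in> states L"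
    "u \<inter> Dset fl = {}" "u \<inter> Cset fl = {}"
  shows "(opl L fl (u \<union> Dset fl) (u \<union> Cset fl))^2 = 1"
  using assms
proof (induction fl arbitrary: u)
  case Nil
  then show ?case by (simp add: opl_Nil idop_def Dset_def Cset_def)
next
  case (Cons p fl)
  obtain f m where p: "p = (f, m)" by (cases p)
  have dist: "distinct (map snd fl)" and mn: "m \<notin> snd ` set fl" and mm: "m \<in> modes L"
    and sub: "snd ` set fl \<subseteq> modes L" using Cons.prems p by auto
  have mD: "m \<notin> Dset fl" "m \<notin> Cset fl" using mn unfolding Dset_def Cset_def by force+
  have DC: "Dset fl \<subseteq> modes L" "Cset fl \<subseteq> modes L" using sub unfolding Dset_def Cset_def by force+
  have DCd: "Dset fl \<inter> Cset fl = {}"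
  proof -
    have "inj_on snd (set fl)" using dist by (simp add: distinct_map)
    then show ?thesis unfolding Dset_def Cset_def inj_on_def by fastforce
  qed
  show ?case
  proof (cases f)
    case FI
    have "Dset (p # fl) = Dset fl" "Cset (p # fl) = Cset fl" using p FI unfolding Dset_def Cset_def by auto
    then show ?thesis using Cons.IH[OF dist sub Cons.prems(3)] Cons.prems(4,5) p FI by (simp add: opl_FI)
  next
    case FZ
    have ds: "Dset (p # fl) = Dset fl" "Cset (p # fl) = Cset fl" using p FZ unfolding Dset_def Cset_def by auto
    have xs: "u \<union> Dset fl \<in> states L" using Cons.prems(3) DC by (auto simp: states_def)
    have e1: "opl L (p # fl) (u \<union> Dset fl) (u \<union> Cset fl) = zval m (u \<union> Dset fl) * opl L fl (u \<union> Dset fl) (u \<union> Cset fl)"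
      unfolding p FZ opl_Cons opmult_def facop_def fac.case zop_eq
      by (subst sum_single[where c="u \<union> Dset fl"]) (auto simp: finite_states xs)
    have "(zval m (u \<union> Dset fl))^2 = 1" by (simp add: zval_def)
    then show ?thesis using e1 Cons.IH[OF dist sub Cons.prems(3)] Cons.prems(4,5) ds
      by (simp add: power_mult_distrib)
  next
    case FD
    have ds: "Dset (p # fl) = insert m (Dset fl)" "Cset (p # fl) = Cset fl" using p FD unfolding Dset_def Cset_def by auto
    have u: "u \<inter> Dset fl = {}" "u \<inter> Cset fl = {}" "m \<notin> u" using Cons.prems(4,5) ds by auto
    have zs: "u \<union> Dset fl \<in> states L" "u \<union> insert m (Dset fl) \<in> states L" "u \<union> Cset fl \<in> states L"
      using Cons.prems(3) DC mm by (auto simp: states_def)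
    have zero: "opl L fl z (u \<union> Cset fl) = 0" if "z \<noteq> u \<union> Dset fl" for z
    proof (rule ccontr)
      assume "opl L fl z (u \<union> Cset fl) \<noteq> 0"
      from opl_shape[OF dist this] have "z = ((u \<union> Cset fl) - Cset fl) \<union> Dset fl" by (intro set_decomp) auto
      also have "\<dots> = u \<union> Dset fl" using u DCd by blast
      finally show False using that by simp
    qed
    have e1: "opl L (p # fl) (u \<union> insert m (Dset fl)) (u \<union> Cset fl)
        = cre L m (u \<union> insert m (Dset fl)) (u \<union> Dset fl) * opl L fl (u \<union> Dset fl) (u \<union> Cset fl)"
      unfolding p FD opl_Cons opmult_def facop_def fac.case
      apply (subst sum_single[where c="u \<union> Dset fl"])
        apply (simp add: finite_states)
       apply (metis zero mult_zero_right)
      apply (simp add: zs)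
      done
    have c: "cre L m (u \<union> insert m (Dset fl)) (u \<union> Dset fl) = jwsign m (u \<union> Dset fl)"
      unfolding cre_def2 using zs u mD by auto
    show ?thesis using e1 c Cons.IH[OF dist sub Cons.prems(3) u(1,2)] ds
      by (simp add: power2_eq_square jwsign_sq sq4)
  next
    case FC
    have ds: "Dset (p # fl) = Dset fl" "Cset (p # fl) = insert m (Cset fl)" using p FC unfolding Dset_def Cset_def by auto
    have u: "u \<inter> Dset fl = {}" "u \<inter> Cset fl = {}" "m \<notin> u" using Cons.prems(4,5) ds by auto
    have u2: "insert m u \<inter> Dset fl = {}" "insert m u \<inter> Cset fl = {}" "insert m u \<in> states L"
      using u mD mm Cons.prems(3) by (auto simp: states_def)
    have zs: "insert m u \<union> Dset fl \<in> states L" "u \<union> Dset fl \<in> states L" "u \<union> insert m (Cset fl) \<in> states L"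
      using Cons.prems(3) DC mm by (auto simp: states_def)
    have zero: "opl L fl z (u \<union> insert m (Cset fl)) = 0" if "z \<noteq> insert m u \<union> Dset fl" for z
    proof (rule ccontr)
      assume "opl L fl z (u \<union> insert m (Cset fl)) \<noteq> 0"
      from opl_shape[OF dist this] have "z = ((u \<union> insert m (Cset fl)) - Cset fl) \<union> Dset fl" by (intro set_decomp) auto
      also have "\<dots> = insert m u \<union> Dset fl" using u mD DCd by blast
      finally show False using that by simp
    qed
    have e1: "opl L (p # fl) (u \<union> Dset fl) (u \<union> insert m (Cset fl))
        = ann L m (u \<union> Dset fl) (insert m u \<union> Dset fl) * opl L fl (insert m u \<union> Dset fl) (u \<union> insert m (Cset fl))"
      unfolding p FC opl_Cons opmult_def facop_def fac.case
      apply (subst sum_single[where c="insert m u \<union> Dset fl"])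
        apply (simp add: finite_states)
       apply (metis zero mult_zero_right)
      apply (simp only: zs if_True)
      done
    have c: "ann L m (u \<union> Dset fl) (insert m u \<union> Dset fl) = jwsign m (insert m u \<union> Dset fl)"
      unfolding ann_def2 using zs u mD by auto
    have "u \<union> insert m (Cset fl) = insert m u \<union> Cset fl" by auto
    then show ?thesis using e1 c Cons.IH[OF dist sub u2(3) u2(1,2)] ds
      by (simp add: power2_eq_square jwsign_sq sq4)
  qed
qed

lemma shape_sum:
  assumes sh: "\<And>x y. G x y \<noteq> 0 \<Longrightarrow> x - y = D \<and> y - x = C"
    and DC: "D \<inter> C = {}" "D \<union> C \<subseteq> modes L"
  shows "(\<Sum>x\<in>states L. \<Sum>y\<in>states L. G x y) = (\<Sum>u\<in>Pow (modes L - (D \<union> C)). G (u \<union> D) (u \<union> C))"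
proof -
  let ?h = "\<lambda>u. (u \<union> D, u \<union> C)"
  let ?U = "Pow (modes L - (D \<union> C))"
  have inj: "inj_on ?h ?U"
  proof (rule inj_onI)
    fix u1 u2 assume u: "u1 \<in> ?U" "u2 \<in> ?U" "?h u1 = ?h u2"
    then have "u1 \<union> D = u2 \<union> D" "u1 \<inter> D = {}" "u2 \<inter> D = {}" by auto
    then show "u1 = u2" by blast
  qed
  have img: "?h ` ?U \<subseteq> states L \<times> states L"
  proof
    fix p assume "p \<in> ?h ` ?U"
    then obtain u where "u \<in> ?U" "p = ?h u" by blast
    then show "p \<in> states L \<times> states L" using DC unfolding states_def by blast
  qed
  have "(\<Sum>x\<in>states L. \<Sum>y\<in>states L. G x y) = (\<Sum>(x,y)\<in>states L \<times> states L. G x y)"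
    by (simp add: sum.cartesian_product)
  also have "\<dots> = (\<Sum>(x,y)\<in>?h ` ?U. G x y)"
  proof (rule sum.mono_neutral_right[OF _ img])
    show "finite (states L \<times> states L)" by (simp add: finite_states)
    show "\<forall>i\<in>states L \<times> states L - ?h ` ?U. (case i of (x, y) \<Rightarrow> G x y) = 0"
    proof (intro ballI)
      fix i assume i: "i \<in> states L \<times> states L - ?h ` ?U"
      obtain x y where xy: "i = (x, y)" by (cases i)
      show "(case i of (x, y) \<Rightarrow> G x y) = 0"
      proof (rule ccontr)
        assume "(case i of (x, y) \<Rightarrow> G x y) \<noteq> 0"
        then have g: "G x y \<noteq> 0" using xy by simp
        from sh[OF g] have s: "x - y = D" "y - x = C" by auto
        have "x \<in> states L" using i xy by blast
        then have U: "x \<inter> y \<in> ?U" using s unfolding states_def by blast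
        have "?h (x \<inter> y) = (x, y)" using s by blast
        then have "i = ?h (x \<inter> y)" using xy by simp
        then have "i \<in> ?h ` ?U" using U by (rule image_eqI)
        then show False using i by blast
      qed
    qed
  qed
  also have "\<dots> = (\<Sum>u\<in>?U. G (u \<union> D) (u \<union> C))"
    by (subst sum.reindex[OF inj]) simp
  finally show ?thesis .
qed

lemma walsh:
  assumes "finite A" "Z \<subseteq> A"
  shows "(\<Sum>u\<in>Pow A. \<Prod>m\<in>Z. zval m u) = (if Z = {} then 2 ^ card A else 0)"
  using assms
proof (induction A arbitrary: Z rule: finite_induct)
  case empty
  then show ?case by simp
next
  case (insert a A)
  have fZ: "finite Z" using insert.prems insert.hyps(1) finite_subset by blast
  have split: "(\<Sum>u\<in>Pow (insert a A). \<Prod>m\<in>Z. zval m u)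
      = (\<Sum>u\<in>Pow A. \<Prod>m\<in>Z. zval m u) + (\<Sum>u\<in>Pow A. \<Prod>m\<in>Z. zval m (insert a u))"
  proof -
    have d: "Pow A \<inter> insert a ` Pow A = {}" using insert.hyps(2) by auto
    have inj: "inj_on (insert a) (Pow A)" using insert.hyps(2) by (auto simp: inj_on_def)
    show ?thesis unfolding Pow_insert
      by (subst sum.union_disjoint) (auto simp: d insert.hyps(1) sum.reindex[OF inj])
  qed
  show ?case
  proof (cases "a \<in> Z")
    case True
    have Z': "Z - {a} \<subseteq> A" using insert.prems by auto
    have e1: "(\<Prod>m\<in>Z. zval m u) = - (\<Prod>m\<in>Z - {a}. zval m u)" if "u \<in> Pow A" for u
    proof -
      have "a \<notin> u" using that insert.hyps(2) by auto
      then show ?thesis using fZ True by (simp add: prod.remove zval_def)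
    qed
    have e2: "(\<Prod>m\<in>Z. zval m (insert a u)) = (\<Prod>m\<in>Z - {a}. zval m u)" if "u \<in> Pow A" for u
    proof -
      have "(\<Prod>m\<in>Z - {a}. zval m (insert a u)) = (\<Prod>m\<in>Z - {a}. zval m u)"
        by (rule prod.cong) (auto simp: zval_def)
      then show ?thesis using fZ True by (simp add: prod.remove zval_def)
    qed
    have "(\<Sum>u\<in>Pow (insert a A). \<Prod>m\<in>Z. zval m u) = 0"
      unfolding split by (simp add: e1 e2 sum_negf)
    then show ?thesis using True by auto
  next
    case False
    have Z': "Z \<subseteq> A" using insert.prems False by auto
    have e2: "(\<Prod>m\<in>Z. zval m (insert a u)) = (\<Prod>m\<in>Z. zval m u)" for u
      by (rule prod.cong) (use False in \<open>auto simp: zval_def\<close>)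
    show ?thesis unfolding split e2 insert.IH[OF Z'] using insert.hyps by auto
  qed
qed

lemma modeq_dvd: "(a::nat) mod L = b mod L \<Longrightarrow> int L dvd int a - int b"
  by (simp add: mod_eq_dvd_iff[symmetric] zmod_int[symmetric])
lemma dvd_small: "(L::int) dvd x \<Longrightarrow> \<bar>x\<bar> < L \<Longrightarrow> x = 0"
proof (rule ccontr)
  assume "L dvd x" "\<bar>x\<bar> < L" "x \<noteq> 0"
  then have "\<bar>L\<bar> \<le> \<bar>x\<bar>" using dvd_imp_le_int by blast
  then show False using \<open>\<bar>x\<bar> < L\<close> by simp
qed

lemma site_inj: assumes "r1 < L" "r2 < L" "site L (i + r1) = site L (i + r2)" shows "r1 = r2"
proof -
  have "int L dvd int (i + r1) - int (i + r2)" using assms(3) unfolding site_def by (rule modeq_dvd)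
  then have "int L dvd int r1 - int r2" by simp
  moreover have "\<bar>int r1 - int r2\<bar> < int L" using assms(1,2) by linarith
  ultimately show ?thesis using dvd_small by fastforce
qed

lemma win_pair:
  assumes "site L a = site L (i + r1)" "site L (a + d) = site L (i + r2)"
    "r1 < k" "r2 < k" "d \<le> k + 1" "k \<le> d + 1" "2 * k + 2 \<le> L"
  shows "r2 = r1 + d"
proof -
  have h1: "int L dvd int a - int (i + r1)" using assms(1) unfolding site_def by (rule modeq_dvd)
  have h2: "int L dvd int (a + d) - int (i + r2)" using assms(2) unfolding site_def by (rule modeq_dvd)
  have "int L dvd (int (a + d) - int (i + r2)) - (int a - int (i + r1))" using h2 h1 by (rule dvd_diff)
  then have "int L dvd int d + int r1 - int r2" by (simp add: algebra_simps)
  moreover have "\<bar>int d + int r1 - int r2\<bar> < int L" using assms(3-7) by linarith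
  ultimately have "int d + int r1 - int r2 = 0" using dvd_small by blast
  then show ?thesis by linarith
qed

definition cp :: "bool \<Rightarrow> fac \<times> fac \<Rightarrow> fac" where "cp \<tau> pr = (if \<tau> then fst pr else snd pr)"

lemma belist_mem:
  "((g, (s0, \<tau>)) \<in> set (belist L i cfg)) = (\<exists>r<length cfg. s0 = site L (i + r) \<and> g = cp \<tau> (cfg ! r))"
  unfolding belist_def cp_def by (cases \<tau>) auto

lemma belist_modes: "0 < L \<Longrightarrow> snd ` set (belist L i cfg) \<subseteq> modes L"
  unfolding belist_def modes_def site_def by auto

lemma belist_distinct: assumes "length cfg \<le> L" shows "distinct (map snd (belist L i cfg))"
proof -
  have inj: "inj_on (\<lambda>r. site L (i + r)) {0..<length cfg}"
  proof (rule inj_onI)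
    fix x y assume "x \<in> {0..<length cfg}" "y \<in> {0..<length cfg}" "site L (i + x) = site L (i + y)"
    then show "x = y" using assms site_inj[of x L y i] by auto
  qed
  show ?thesis unfolding belist_def using inj
    by (auto simp: distinct_map inj_on_def)
qed

lemma Dset_belist: "((s0, \<tau>) \<in> Dset (belist L i cfg)) = (\<exists>r<length cfg. s0 = site L (i + r) \<and> cp \<tau> (cfg ! r) = FD)"
  unfolding Dset_def using belist_mem by auto
lemma Cset_belist: "((s0, \<tau>) \<in> Cset (belist L i cfg)) = (\<exists>r<length cfg. s0 = site L (i + r) \<and> cp \<tau> (cfg ! r) = FC)"
  unfolding Cset_def using belist_mem by auto
lemma Zset_belist: "((s0, \<tau>) \<in> Zset (belist L i cfg)) = (\<exists>r<length cfg. s0 = site L (i + r) \<and> cp \<tau> (cfg ! r) = FZ)"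
  unfolding Zset_def using belist_mem by auto

lemma belist_site_cong: "site L i = site L w \<Longrightarrow> belist L i cfg = belist L w cfg"
  unfolding belist_def site_def by (simp add: mod_add_left_eq[symmetric, of i] mod_add_left_eq[symmetric, of w])

definition ezp :: "fac \<times> fac \<Rightarrow> fac \<times> fac" where
  "ezp pr = (if fst pr = FZ then FI else fst pr, if snd pr = FZ then FI else snd pr)"

lemma eraseZ_belist: "eraseZ (belist L i cfg) = belist L i (map ezp cfg)"
  unfolding eraseZ_def belist_def ezp_def by auto

lemma ZDC_disj: assumes "distinct (map snd fl)"
  shows "Zset fl \<inter> Dset fl = {}" "Zset fl \<inter> Cset fl = {}" "Dset fl \<inter> Cset fl = {}"
proof -
  have "inj_on snd (set fl)" using assms by (simp add: distinct_map)
  then show "Zset fl \<inter> Dset fl = {}" "Zset fl \<inter> Cset fl = {}" "Dset fl \<inter> Cset fl = {}"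
    unfolding Dset_def Cset_def Zset_def inj_on_def by fastforce+
qed

lemma DCZ_modes: "Dset fl \<subseteq> snd ` set fl" "Cset fl \<subseteq> snd ` set fl" "Zset fl \<subseteq> snd ` set fl"
  unfolding Dset_def Cset_def Zset_def by force+

definition fs :: "bool \<Rightarrow> fac" where "fs s = (if s then FD else FC)"

lemma qcfg_len: "2 \<le> k \<Longrightarrow> length (qcfg k \<sigma> \<mu> s) = k"
  unfolding qcfg_def Let_def by simp

lemma qcfg_cp:
  assumes "2 \<le> k" "r < k"
  shows "cp \<tau> (qcfg k \<sigma> \<mu> s ! r) = (if (r = 0 \<and> \<tau> = \<sigma>) \<or> (r = k - 1 \<and> \<tau> = \<mu>) then fs s else FI)"
proof -
  consider "r = 0" | "r = k - 1" | "0 < r \<and> r < k - 1" using assms by linarith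
  then show ?thesis
  proof cases
    case 1
    then show ?thesis using assms unfolding qcfg_def Let_def cp_def fs_def by auto
  next
    case 2
    let ?x = "(if \<sigma> then (fs s, FI) else (FI, fs s)) # replicate (k - 2) (FI, FI)"
    have q: "qcfg k \<sigma> \<mu> s = ?x @ [if \<mu> then (fs s, FI) else (FI, fs s)]"
      unfolding qcfg_def Let_def fs_def by simp
    have "r = length ?x" using 2 assms by simp
    then have "qcfg k \<sigma> \<mu> s ! r = (if \<mu> then (fs s, FI) else (FI, fs s))"
      unfolding q by (simp only: nth_append_length)
    then show ?thesis using 2 assms unfolding cp_def by auto
  next
    case 3
    have "qcfg k \<sigma> \<mu> s ! r = (FI, FI)"
    proof -
      have "r - Suc 0 < k - 2" using 3 by linarith
      then show ?thesis using 3 assms unfolding qcfg_def Let_def fs_def by (simp add: nth_append nth_Cons')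
    qed
    then show ?thesis using 3 unfolding cp_def by auto
  qed
qed

lemma qcfg_in: "2 \<le> k \<Longrightarrow> qcfg k \<sigma> \<mu> s \<in> cfgs k"
  unfolding cfgs_def qcfg_def Let_def by auto

lemma XS_belist:
  "((s0, \<tau>) \<in> (if s then Dset (belist L i cfg) else Cset (belist L i cfg)))
     = (\<exists>r<length cfg. s0 = site L (i + r) \<and> cp \<tau> (cfg ! r) = fs s)"
  by (cases s) (simp_all add: Dset_belist Cset_belist fs_def)

lemma YS_belist:
  "((s0, \<tau>) \<in> (if s then Cset (belist L i cfg) else Dset (belist L i cfg)))
     = (\<exists>r<length cfg. s0 = site L (i + r) \<and> cp \<tau> (cfg ! r) = fs (\<not> s))"
  by (cases s) (simp_all add: Dset_belist Cset_belist fs_def)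

lemma site_shift: "site L i = site L w \<Longrightarrow> site L (i + r) = site L (w + r)"
  unfolding site_def by (metis mod_add_left_eq)

lemma CLS:
  assumes k: "2 \<le> k" "2 * k + 2 \<le> L" and l: "length cfg \<le> k"
    and hX: "(if s then Dset (belist L i cfg) else Cset (belist L i cfg)) = {(site L w, \<sigma>), (site L (w + k - 1), \<mu>)}"
    and hY: "(if s then Cset (belist L i cfg) else Dset (belist L i cfg)) = {}"
  shows "length cfg = k" "site L i = site L w"
    "\<And>r \<tau>. r < k \<Longrightarrow> cp \<tau> (cfg ! r) \<noteq> fs (\<not> s)"
    "\<And>r \<tau>. r < k \<Longrightarrow> (cp \<tau> (cfg ! r) = fs s) = ((r = 0 \<and> \<tau> = \<sigma>) \<or> (r = k - 1 \<and> \<tau> = \<mu>))"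
proof -
  have "(site L w, \<sigma>) \<in> (if s then Dset (belist L i cfg) else Cset (belist L i cfg))" using hX by simp
  then obtain r1 where r1: "r1 < length cfg" "site L w = site L (i + r1)" by (auto simp: XS_belist)
  have "(site L (w + k - 1), \<mu>) \<in> (if s then Dset (belist L i cfg) else Cset (belist L i cfg))" using hX by simp
  then obtain r2 where r2: "r2 < length cfg" "site L (w + (k - 1)) = site L (i + r2)" using k by (auto simp: XS_belist)
  have "r2 = r1 + (k - 1)" by (rule win_pair[OF r1(2) r2(2)]) (use r1 r2 l k in auto)
  then have rr: "r1 = 0" "r2 = k - 1" "length cfg = k" using r1 r2 l k by auto
  show lk: "length cfg = k" by (rule rr(3))
  show si: "site L i = site L w" using r1 rr by simp
  have siteeq: "(site L (i + r) = site L (i + r')) = (r = r')" if "r < k" "r' < k" for r r'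
    using site_inj[of r L r' i] that k by auto
  show "cp \<tau> (cfg ! r) \<noteq> fs (\<not> s)" if "r < k" for r \<tau>
  proof
    assume "cp \<tau> (cfg ! r) = fs (\<not> s)"
    then have "(site L (i + r), \<tau>) \<in> (if s then Cset (belist L i cfg) else Dset (belist L i cfg))"
      using that lk by (auto simp: YS_belist)
    then show False using hY by simp
  qed
  show "(cp \<tau> (cfg ! r) = fs s) = ((r = 0 \<and> \<tau> = \<sigma>) \<or> (r = k - 1 \<and> \<tau> = \<mu>))" if r: "r < k" for r \<tau>
  proof -
    have "(cp \<tau> (cfg ! r) = fs s) = ((site L (i + r), \<tau>) \<in> (if s then Dset (belist L i cfg) else Cset (belist L i cfg)))"
      using r lk siteeq by (auto simp: XS_belist)
    also have "\<dots> = ((site L (i + r), \<tau>) = (site L (i + 0), \<sigma>) \<or> (site L (i + r), \<tau>) = (site L (i + (k - 1)), \<mu>))"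
      using hX site_shift[OF si, of 0] site_shift[OF si, of "k - 1"] k by simp
    also have "\<dots> = ((r = 0 \<and> \<tau> = \<sigma>) \<or> (r = k - 1 \<and> \<tau> = \<mu>))"
      using siteeq[OF r, of 0] siteeq[OF r, of "k - 1"] k by auto
    finally show ?thesis .
  qed
qed

lemma pair_cp: "pr = (cp True pr, cp False pr)" unfolding cp_def by simp
lemma cp_ezp: "cp \<tau> (ezp pr) = (if cp \<tau> pr = FZ then FI else cp \<tau> pr)" unfolding cp_def ezp_def by auto

lemma CLS_ezp:
  assumes k: "2 \<le> k" and lk: "length cfg = k"
    and c1: "\<And>r \<tau>. r < k \<Longrightarrow> cp \<tau> (cfg ! r) \<noteq> fs (\<not> s)"
    and c2: "\<And>r \<tau>. r < k \<Longrightarrow> (cp \<tau> (cfg ! r) = fs s) = ((r = 0 \<and> \<tau> = \<sigma>) \<or> (r = k - 1 \<and> \<tau> = \<mu>))"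
  shows "map ezp cfg = qcfg k \<sigma> \<mu> s"
proof (rule nth_equalityI)
  show "length (map ezp cfg) = length (qcfg k \<sigma> \<mu> s)" using lk qcfg_len[OF k] by simp
  fix r assume "r < length (map ezp cfg)"
  then have r: "r < k" using lk by simp
  have "cp \<tau> (map ezp cfg ! r) = cp \<tau> (qcfg k \<sigma> \<mu> s ! r)" for \<tau>
  proof -
    have "cp \<tau> (cfg ! r) \<in> {FI, FC, FD, FZ}" by (cases "cp \<tau> (cfg ! r)") auto
    then show ?thesis using c1[OF r, of \<tau>] c2[OF r, of \<tau>] r lk
      by (auto simp: cp_ezp qcfg_cp[OF k r] fs_def split: if_splits)
  qed
  then show "map ezp cfg ! r = qcfg k \<sigma> \<mu> s ! r"
    by (metis pair_cp)
qed

lemma noZ_ezp: assumes "\<forall>r<length cfg. \<forall>\<tau>. cp \<tau> (cfg ! r) \<noteq> FZ" shows "map ezp cfg = cfg"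
proof (rule nth_equalityI)
  fix i assume i: "i < length (map ezp cfg)"
  obtain a b where ab: "cfg ! i = (a, b)" by (cases "cfg ! i")
  have "a \<noteq> FZ" "b \<noteq> FZ" using assms i ab unfolding cp_def
    by (metis fst_conv length_map snd_conv)+
  then show "map ezp cfg ! i = cfg ! i" using i ab by (simp add: ezp_def)
qed simp

lemma qcfg_noZ: "2 \<le> k \<Longrightarrow> r < k \<Longrightarrow> cp \<tau> (qcfg k \<sigma> \<mu> s ! r) \<noteq> FZ"
  by (simp add: qcfg_cp fs_def)

lemma card_modes: "card (modes L) = 2 * L"
  unfolding modes_def by (simp add: card_cartesian_product)

lemma q_shape:
  assumes k: "2 \<le> k"
  shows "(if s then Dset (belist L w (qcfg k \<sigma> \<mu> s)) else Cset (belist L w (qcfg k \<sigma> \<mu> s)))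
           = {(site L w, \<sigma>), (site L (w + k - 1), \<mu>)}"
    "(if s then Cset (belist L w (qcfg k \<sigma> \<mu> s)) else Dset (belist L w (qcfg k \<sigma> \<mu> s))) = {}"
    "Zset (belist L w (qcfg k \<sigma> \<mu> s)) = {}"
proof -
  show "(if s then Dset (belist L w (qcfg k \<sigma> \<mu> s)) else Cset (belist L w (qcfg k \<sigma> \<mu> s)))
           = {(site L w, \<sigma>), (site L (w + k - 1), \<mu>)}"
  proof (intro set_eqI)
    fix p :: mode
    obtain s0 \<tau> where p: "p = (s0, \<tau>)" by (cases p)
    have "(p \<in> (if s then Dset (belist L w (qcfg k \<sigma> \<mu> s)) else Cset (belist L w (qcfg k \<sigma> \<mu> s))))
        = (\<exists>r<k. s0 = site L (w + r) \<and> ((r = 0 \<and> \<tau> = \<sigma>) \<or> (r = k - 1 \<and> \<tau> = \<mu>)))"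
    proof -
      have eqv: "\<And>r. r<k \<Longrightarrow> (cp \<tau> (qcfg k \<sigma> \<mu> s ! r) = fs s) = ((r = 0 \<and> \<tau> = \<sigma>) \<or> (r = k - 1 \<and> \<tau> = \<mu>))"
        using qcfg_cp[OF k] by (simp add: fs_def)
      show ?thesis unfolding p XS_belist qcfg_len[OF k] using eqv by blast
    qed
    also have "\<dots> = (p \<in> {(site L w, \<sigma>), (site L (w + k - 1), \<mu>)})"
    proof
      assume "\<exists>r<k. s0 = site L (w + r) \<and> ((r = 0 \<and> \<tau> = \<sigma>) \<or> (r = k - 1 \<and> \<tau> = \<mu>))"
      then show "p \<in> {(site L w, \<sigma>), (site L (w + k - 1), \<mu>)}" using p k by auto
    next
      assume "p \<in> {(site L w, \<sigma>), (site L (w + k - 1), \<mu>)}"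
      then show "\<exists>r<k. s0 = site L (w + r) \<and> ((r = 0 \<and> \<tau> = \<sigma>) \<or> (r = k - 1 \<and> \<tau> = \<mu>))"
      proof
        assume "p = (site L w, \<sigma>)" then show ?thesis using p k by (intro exI[of _ 0]) auto
      next
        assume "p \<in> {(site L (w + k - 1), \<mu>)}" then show ?thesis using p k by (intro exI[of _ "k - 1"]) auto
      qed
    qed
    finally show "(p \<in> (if s then Dset (belist L w (qcfg k \<sigma> \<mu> s)) else Cset (belist L w (qcfg k \<sigma> \<mu> s))))
        = (p \<in> {(site L w, \<sigma>), (site L (w + k - 1), \<mu>)})" .
  qed
  show "(if s then Cset (belist L w (qcfg k \<sigma> \<mu> s)) else Dset (belist L w (qcfg k \<sigma> \<mu> s))) = {}"
  proof (intro set_eqI)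
    fix p :: mode
    obtain s0 \<tau> where p: "p = (s0, \<tau>)" by (cases p)
    show "(p \<in> (if s then Cset (belist L w (qcfg k \<sigma> \<mu> s)) else Dset (belist L w (qcfg k \<sigma> \<mu> s)))) = (p \<in> {})"
      unfolding p YS_belist qcfg_len[OF k] using qcfg_cp[OF k] by (auto simp: fs_def)
  qed
  show "Zset (belist L w (qcfg k \<sigma> \<mu> s)) = {}"
  proof (intro set_eqI)
    fix p :: mode
    obtain s0 \<tau> where p: "p = (s0, \<tau>)" by (cases p)
    show "(p \<in> Zset (belist L w (qcfg k \<sigma> \<mu> s))) = (p \<in> {})"
      unfolding p Zset_belist qcfg_len[OF k] using qcfg_noZ[OF k] by auto
  qed
qed

lemma core:
  assumes k2: "2 \<le> k" and kL: "2 * k + 2 \<le> L" and lc: "length cfg \<le> k"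
  shows "ip L (belem L w (qcfg k \<sigma> \<mu> s)) (belem L i cfg)
       = (if length cfg = k \<and> site L i = site L w \<and> cfg = qcfg k \<sigma> \<mu> s then 2 ^ (2 * L - 2) else 0)"
proof -
  define q where "q = qcfg k \<sigma> \<mu> s"
  define ql where "ql = belist L w q"
  define fl where "fl = belist L i cfg"
  have L0: "0 < L" using kL by simp
  have qlen: "length q = k" using qcfg_len[OF k2] q_def by simp
  have dql: "distinct (map snd ql)" unfolding ql_def using qlen kL by (intro belist_distinct) simp
  have dfl: "distinct (map snd fl)" unfolding fl_def using lc kL by (intro belist_distinct) simp
  have mql: "snd ` set ql \<subseteq> modes L" unfolding ql_def using belist_modes[OF L0] .
  have mfl: "snd ` set fl \<subseteq> modes L" unfolding fl_def using belist_modes[OF L0] .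
  have qs: "(if s then Dset ql else Cset ql) = {(site L w, \<sigma>), (site L (w + k - 1), \<mu>)}"
     "(if s then Cset ql else Dset ql) = {}" "Zset ql = {}"
    unfolding ql_def q_def by (rule q_shape[OF k2])+
  have ipdef: "ip L (belem L w q) (belem L i cfg) = (\<Sum>x\<in>states L. \<Sum>y\<in>states L. opl L ql x y * opl L fl x y)"
    unfolding ip_def belem_opl ql_def fl_def ..
  show ?thesis
  proof (cases "Dset fl = Dset ql \<and> Cset fl = Cset ql")
    case False
    have pz: "opl L ql x y * opl L fl x y = 0" for x y
    proof (rule ccontr)
      assume "opl L ql x y * opl L fl x y \<noteq> 0"
      then have "opl L ql x y \<noteq> 0" "opl L fl x y \<noteq> 0" by auto
      from opl_shape[OF dql this(1)] opl_shape[OF dfl this(2)] False show False by auto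
    qed
    have "ip L (belem L w q) (belem L i cfg) = 0" unfolding ipdef pz by simp
    moreover have "\<not> (length cfg = k \<and> site L i = site L w \<and> cfg = q)"
    proof
      assume "length cfg = k \<and> site L i = site L w \<and> cfg = q"
      then have "fl = ql" unfolding fl_def ql_def using belist_site_cong by blast
      then show False using False by simp
    qed
    ultimately show ?thesis unfolding q_def by simp
  next
    case True
    have hX: "(if s then Dset (belist L i cfg) else Cset (belist L i cfg)) = {(site L w, \<sigma>), (site L (w + k - 1), \<mu>)}"
      using qs(1) True unfolding fl_def by (cases s) simp_all
    have hY: "(if s then Cset (belist L i cfg) else Dset (belist L i cfg)) = {}"
      using qs(2) True unfolding fl_def by (cases s) simp_all
    note cls = CLS[OF k2 kL lc hX hY]
    have ez: "map ezp cfg = q" unfolding q_def using CLS_ezp[OF k2 cls(1) cls(3) cls(4)] by blast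
    have efl: "eraseZ fl = ql" unfolding fl_def ql_def eraseZ_belist ez using belist_site_cong[OF cls(2)] by blast
    define Z where "Z = Zset fl"
    define D where "D = Dset ql"
    define C where "C = Cset ql"
    have fle: "opl L fl x y = opl L ql x y * (\<Prod>m\<in>Z. zval m y)" for x y
      using opl_eraseZ[OF dfl, of L x y] unfolding efl Z_def .
    have DC: "D \<inter> C = {}" "D \<union> C \<subseteq> modes L" unfolding D_def C_def using ZDC_disj[OF dql] DCZ_modes[of ql] mql by auto
    have PQ: "(site L w, \<sigma>) \<noteq> (site L (w + k - 1), \<mu>)"
    proof
      assume "(site L w, \<sigma>) = (site L (w + k - 1), \<mu>)"
      then have "site L (w + 0) = site L (w + (k - 1))" using k2 by simp
      then have "0 = k - 1" using site_inj[of 0 L "k - 1" w] k2 kL by linarith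
      then show False using k2 by simp
    qed
    have DCu: "D \<union> C = {(site L w, \<sigma>), (site L (w + k - 1), \<mu>)}" using qs unfolding D_def C_def by (cases s) auto
    have cardA: "card (modes L - (D \<union> C)) = 2 * L - 2"
      using DC(2) PQ by (simp add: card_Diff_subset finite_modes card_modes DCu)
    have ZA: "Z \<subseteq> modes L - (D \<union> C)"
      using ZDC_disj[OF dfl] DCZ_modes[of fl] mfl True unfolding Z_def D_def C_def by auto
    have "ip L (belem L w q) (belem L i cfg) = (\<Sum>x\<in>states L. \<Sum>y\<in>states L. opl L ql x y * (opl L ql x y * (\<Prod>m\<in>Z. zval m y)))"
      unfolding ipdef fle ..
    also have "\<dots> = (\<Sum>u\<in>Pow (modes L - (D \<union> C)). opl L ql (u \<union> D) (u \<union> C) * (opl L ql (u \<union> D) (u \<union> C) * (\<Prod>m\<in>Z. zval m (u \<union> C))))"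
    proof (rule shape_sum[OF _ DC])
      fix x y assume "opl L ql x y * (opl L ql x y * (\<Prod>m\<in>Z. zval m y)) \<noteq> 0"
      then have "opl L ql x y \<noteq> 0" by auto
      then show "x - y = D \<and> y - x = C" using opl_shape[OF dql] unfolding D_def C_def by blast
    qed
    also have "\<dots> = (\<Sum>u\<in>Pow (modes L - (D \<union> C)). \<Prod>m\<in>Z. zval m u)"
    proof (rule sum.cong[OF refl])
      fix u assume u: "u \<in> Pow (modes L - (D \<union> C))"
      then have us: "u \<in> states L" "u \<inter> Dset ql = {}" "u \<inter> Cset ql = {}" unfolding states_def D_def C_def by auto
      have sq: "(opl L ql (u \<union> D) (u \<union> C))^2 = 1" unfolding D_def C_def by (rule opl_sq[OF dql mql us])
      have "(\<Prod>m\<in>Z. zval m (u \<union> C)) = (\<Prod>m\<in>Z. zval m u)"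
        by (rule prod.cong[OF refl]) (use ZA in \<open>auto simp: zval_def\<close>)
      then show "opl L ql (u \<union> D) (u \<union> C) * (opl L ql (u \<union> D) (u \<union> C) * (\<Prod>m\<in>Z. zval m (u \<union> C))) = (\<Prod>m\<in>Z. zval m u)"
        using sq by (simp add: power2_eq_square mult.assoc[symmetric])
    qed
    also have "\<dots> = (if Z = {} then 2 ^ (2 * L - 2) else 0)"
      using walsh[OF _ ZA] finite_modes cardA by simp
    also have "(Z = {}) = (cfg = q)"
    proof
      assume Z: "Z = {}"
      have "\<forall>r<length cfg. \<forall>\<tau>. cp \<tau> (cfg ! r) \<noteq> FZ"
      proof (intro allI impI)
        fix r \<tau> assume "r < length cfg"
        then show "cp \<tau> (cfg ! r) \<noteq> FZ" using Z unfolding Z_def fl_def using Zset_belist[of "site L (i + r)" \<tau> L i cfg] by auto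
      qed
      then show "cfg = q" using noZ_ezp ez by metis
    next
      assume "cfg = q"
      then have "fl = ql" unfolding fl_def ql_def using belist_site_cong[OF cls(2)] by simp
      then show "Z = {}" using qs(3) unfolding Z_def by simp
    qed
    finally show ?thesis using cls(1,2) unfolding q_def by simp
  qed
qed

lemma ip_sum: "ip L A (\<lambda>x y. \<Sum>j\<in>J. B j x y) = (\<Sum>j\<in>J. ip L A (B j))"
proof -
  have "ip L A (\<lambda>x y. \<Sum>j\<in>J. B j x y) = (\<Sum>x\<in>states L. \<Sum>y\<in>states L. \<Sum>j\<in>J. A x y * B j x y)"
    unfolding ip_def by (simp add: sum_distrib_left)
  also have "\<dots> = (\<Sum>x\<in>states L. \<Sum>j\<in>J. \<Sum>y\<in>states L. A x y * B j x y)"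
    by (rule sum.cong[OF refl]) (rule sum.swap)
  also have "\<dots> = (\<Sum>j\<in>J. \<Sum>x\<in>states L. \<Sum>y\<in>states L. A x y * B j x y)"
    by (rule sum.swap)
  finally show ?thesis unfolding ip_def .
qed

lemma ip_scale: "ip L A (\<lambda>x y. c * B x y) = c * ip L A B"
  unfolding ip_def by (simp add: sum_distrib_left mult_ac)

lemma finite_fac: "finite (UNIV :: fac set)"
proof -
  have h: "(UNIV :: fac set) = {FI, FC, FD, FZ}" by (auto intro: fac.exhaust)
  show ?thesis unfolding h by simp
qed

lemma finite_cfgs: "finite (cfgs l)"
proof -
  have "finite (UNIV :: (fac \<times> fac) set)" using finite_fac by (simp add: finite_Prod_UNIV)
  then have "finite {xs :: (fac \<times> fac) list. set xs \<subseteq> UNIV \<and> length xs = l}" by (rule finite_lists_length_eq)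
  then show ?thesis by (rule finite_subset[rotated]) (auto simp: cfgs_def)
qed

definition idx :: "nat \<Rightarrow> nat \<Rightarrow> nat" where "idx L w = (if w mod L = 0 then L else w mod L)"

lemma idx_in: "0 < L \<Longrightarrow> idx L w \<in> {1..L}"
  unfolding idx_def by (auto simp: Suc_le_eq)

lemma site_idx: "0 < L \<Longrightarrow> i \<in> {1..L} \<Longrightarrow> (site L i = site L w) = (i = idx L w)"
proof -
  assume L: "0 < L" and i: "i \<in> {1..L}"
  show ?thesis
  proof (cases "i = L")
    case True
    then show ?thesis unfolding site_def idx_def using L by (auto simp: mod_less_divisor) (metis mod_less_divisor nat_neq_iff)
  next
    case False
    then have "i < L" "0 < i" using i by auto
    then show ?thesis unfolding site_def idx_def by auto
  qed
qed

lemma ip_Fk: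
  assumes k2: "2 \<le> k" and kL: "2 * k + 2 \<le> L"
  shows "ip L (belem L w (qcfg k \<sigma> \<mu> s)) (Fk L k coef) = 2 ^ (2 * L - 2) * coef k (idx L w) (qcfg k \<sigma> \<mu> s)"
proof -
  define q where "q = qcfg k \<sigma> \<mu> s"
  define c0 :: complex where "c0 = 2 ^ (2 * L - 2)"
  have L0: "0 < L" using kL by simp
  have "ip L (belem L w q) (Fk L k coef) = (\<Sum>l\<in>{1..k}. \<Sum>i\<in>{1..L}. \<Sum>cfg\<in>cfgs l. coef l i cfg * ip L (belem L w q) (belem L i cfg))"
    unfolding Fk_def by (simp add: ip_sum ip_scale)
  also have "\<dots> = (\<Sum>l\<in>{1..k}. \<Sum>i\<in>{1..L}. \<Sum>cfg\<in>cfgs l. if l = k \<and> i = idx L w \<and> cfg = q then coef k (idx L w) q * c0 else 0)"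
  proof (intro sum.cong[OF refl])
    fix l i cfg assume l: "l \<in> {1..k}" and i: "i \<in> {1..L}" and c: "cfg \<in> cfgs l"
    have lc: "length cfg = l" using c by (simp add: cfgs_def)
    then show "coef l i cfg * ip L (belem L w q) (belem L i cfg) = (if l = k \<and> i = idx L w \<and> cfg = q then coef k (idx L w) q * c0 else 0)"
      using core[OF k2 kL, of cfg w \<sigma> \<mu> s i] l site_idx[OF L0 i, of w] unfolding q_def c0_def by auto
  qed
  also have "\<dots> = coef k (idx L w) q * c0"
  proof -
    have qin: "q \<in> cfgs k" unfolding q_def by (rule qcfg_in[OF k2])
    have "(\<Sum>cfg\<in>cfgs l. if l = k \<and> i = idx L w \<and> cfg = q then coef k (idx L w) q * c0 else 0)
        = (if l = k \<and> i = idx L w then coef k (idx L w) q * c0 else 0)" for l i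
      using qin by (auto simp: finite_cfgs)
    moreover have "(\<Sum>i\<in>{1..L}. if l = k \<and> i = idx L w then coef k (idx L w) q * c0 else 0)
        = (if l = k then coef k (idx L w) q * c0 else 0)" for l
      using idx_in[OF L0, of w] by (cases "l = k") simp_all
    ultimately show ?thesis using k2 by simp
  qed
  finally show ?thesis unfolding q_def c0_def by (simp add: mult.commute)
qed

lemma ip_mult_right: "ip L A (opmult L F M) = ip L (opmult L A (optr M)) F"
proof -
  have "ip L A (opmult L F M) = (\<Sum>x\<in>states L. \<Sum>y\<in>states L. \<Sum>z\<in>states L. A x y * (F x z * M z y))"
    unfolding ip_def opmult_def by (simp add: sum_distrib_left)
  also have "\<dots> = (\<Sum>x\<in>states L. \<Sum>z\<in>states L. \<Sum>y\<in>states L. A x y * (F x z * M z y))"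
    by (rule sum.cong[OF refl]) (rule sum.swap)
  also have "\<dots> = (\<Sum>x\<in>states L. \<Sum>z\<in>states L. (\<Sum>y\<in>states L. A x y * optr M y z) * F x z)"
    by (simp add: sum_distrib_right sum_distrib_left optr_def mult_ac)
  finally show ?thesis unfolding ip_def opmult_def .
qed

lemma ip_mult_left: "ip L A (opmult L M F) = ip L (opmult L (optr M) A) F"
proof -
  have "ip L A (opmult L M F) = (\<Sum>x\<in>states L. \<Sum>y\<in>states L. \<Sum>z\<in>states L. A x y * (M x z * F z y))"
    unfolding ip_def opmult_def by (simp add: sum_distrib_left)
  also have "\<dots> = (\<Sum>x\<in>states L. \<Sum>z\<in>states L. \<Sum>y\<in>states L. A x y * (M x z * F z y))"
    by (rule sum.cong[OF refl]) (rule sum.swap)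
  also have "\<dots> = (\<Sum>z\<in>states L. \<Sum>x\<in>states L. \<Sum>y\<in>states L. A x y * (M x z * F z y))"
    by (rule sum.swap)
  also have "\<dots> = (\<Sum>z\<in>states L. \<Sum>y\<in>states L. \<Sum>x\<in>states L. A x y * (M x z * F z y))"
    by (rule sum.cong[OF refl]) (rule sum.swap)
  also have "\<dots> = (\<Sum>z\<in>states L. \<Sum>y\<in>states L. (\<Sum>x\<in>states L. optr M z x * A x y) * F z y)"
    by (simp add: sum_distrib_right sum_distrib_left optr_def mult_ac)
  finally show ?thesis unfolding ip_def opmult_def .
qed

lemma ip_diff1: "ip L (\<lambda>x y. X x y - Y x y) F = ip L X F - ip L Y F"
  unfolding ip_def by (simp add: algebra_simps sum_subtractf)
lemma ip_if1: "ip L (\<lambda>x y. if c then X x y else 0) F = (if c then ip L X F else 0)"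
  unfolding ip_def by simp
lemma ip_add: "ip L A (\<lambda>x y. X x y + Y x y) = ip L A X + ip L A Y"
  unfolding ip_def by (simp add: algebra_simps sum.distrib)

lemma opmult_add_right_f: "opmult L F (\<lambda>x y. B1 x y + B2 x y) = (\<lambda>x y. opmult L F B1 x y + opmult L F B2 x y)"
  unfolding opmult_def by (simp add: algebra_simps sum.distrib)
lemma opmult_add_left_f: "opmult L (\<lambda>x y. B1 x y + B2 x y) F = (\<lambda>x y. opmult L B1 F x y + opmult L B2 F x y)"
  unfolding opmult_def by (simp add: algebra_simps sum.distrib)
lemma opmult_scale_right_f: "opmult L F (\<lambda>x y. c * B x y) = (\<lambda>x y. c * opmult L F B x y)"
  unfolding opmult_def by (simp add: algebra_simps sum_distrib_left)
lemma opmult_scale_left_f: "opmult L (\<lambda>x y. c * B x y) F = (\<lambda>x y. c * opmult L B F x y)"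
  unfolding opmult_def by (simp add: algebra_simps sum_distrib_left)
lemma opmult_sum_right_f: "opmult L F (\<lambda>x y. \<Sum>j\<in>J. G j x y) = (\<lambda>x y. \<Sum>j\<in>J. opmult L F (G j) x y)"
  unfolding opmult_def by (intro ext) (simp add: sum_distrib_left, rule sum.swap)
lemma opmult_sum_left_f: "opmult L (\<lambda>x y. \<Sum>j\<in>J. G j x y) F = (\<lambda>x y. \<Sum>j\<in>J. opmult L (G j) F x y)"
  unfolding opmult_def by (intro ext) (simp add: sum_distrib_right, rule sum.swap)

definition csop :: "nat \<Rightarrow> bool \<Rightarrow> mode \<Rightarrow> op" where "csop L s m = (if s then cre L m else ann L m)"

lemma facop_fs: "facop L (fs s) m = csop L s m" unfolding facop_def fs_def csop_def by simp

lemma csop_pair: "opmult L (csop L s u) (csop L s v) = opl L [(fs s, u), (fs s, v)]"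
  by (simp add: opl_Cons opl_Nil facop_fs idop_right good_opl[of L "[]", unfolded opl_Nil]
      csop_def good_cre good_ann)

lemma csop_swap: "opmult L (csop L s u) (csop L s v) x y = - opmult L (csop L s v) (csop L s u) x y"
  unfolding csop_def by (cases s) (simp only: if_True, rule cre_cre, simp only: if_False, rule ann_ann)

lemma far_zero:
  assumes k2: "2 \<le> k" and kL: "2 * k + 2 \<le> L" and lc: "length cfg \<le> k"
    and d: "k \<le> d" "d \<le> k + 1"
  shows "opmult L (csop L s (site L a, \<tau>1)) (csop L s (site L (a + d), \<tau>2)) x y * belem L i cfg x y = 0"
proof (rule ccontr)
  let ?u = "(site L a, \<tau>1)" and ?v = "(site L (a + d), \<tau>2)"
  assume "opmult L (csop L s ?u) (csop L s ?v) x y * belem L i cfg x y \<noteq> 0"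
  then have n1: "opl L [(fs s, ?u), (fs s, ?v)] x y \<noteq> 0" and n2: "opl L (belist L i cfg) x y \<noteq> 0"
    by (auto simp: csop_pair belem_opl)
  have uv: "?u \<noteq> ?v"
  proof
    assume "?u = ?v"
    then have "site L (a + 0) = site L (a + d)" by simp
    then have "0 = d" using site_inj[of 0 L d a] d kL by linarith
    then show False using d k2 by simp
  qed
  have dist1: "distinct (map snd [(fs s, ?u), (fs s, ?v)])" using uv by simp
  have dist2: "distinct (map snd (belist L i cfg))" using lc kL by (intro belist_distinct) simp
  from opl_shape[OF dist1 n1] opl_shape[OF dist2 n2]
  have sh: "Dset (belist L i cfg) = Dset [(fs s, ?u), (fs s, ?v)]" "Cset (belist L i cfg) = Cset [(fs s, ?u), (fs s, ?v)]"
    by auto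
  have "?u \<in> (if s then Dset (belist L i cfg) else Cset (belist L i cfg))"
       "?v \<in> (if s then Dset (belist L i cfg) else Cset (belist L i cfg))"
    unfolding sh by (cases s; simp add: Dset_def Cset_def fs_def)+
  then obtain r1 r2 where r: "r1 < length cfg" "site L a = site L (i + r1)"
      "r2 < length cfg" "site L (a + d) = site L (i + r2)"
    unfolding XS_belist by blast
  have "r2 = r1 + d" by (rule win_pair[OF r(2) r(4)]) (use r lc d kL in auto)
  then show False using r lc d by linarith
qed

lemma Fk_zero:
  assumes "\<And>l i cfg. l \<in> {1..k} \<Longrightarrow> cfg \<in> cfgs l \<Longrightarrow> A x y * belem L i cfg x y = 0"
  shows "A x y * Fk L k coef x y = 0"
  unfolding Fk_def by (simp add: sum_distrib_left mult.left_commute[of "A x y"] assms)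

lemma cfgs_len: "l \<in> {1..k} \<Longrightarrow> cfg \<in> cfgs l \<Longrightarrow> length cfg \<le> k"
  unfolding cfgs_def by auto

lemma far_zero_Fk:
  assumes k2: "2 \<le> k" and kL: "2 * k + 2 \<le> L" and d: "k \<le> d" "d \<le> k + 1"
  shows "ip L (opmult L (csop L s (site L a, \<tau>1)) (csop L s (site L (a + d), \<tau>2))) (Fk L k coef) = 0"
proof -
  have pz: "opmult L (csop L s (site L a, \<tau>1)) (csop L s (site L (a + d), \<tau>2)) x y * Fk L k coef x y = 0" for x y
    by (rule Fk_zero) (rule far_zero[OF k2 kL cfgs_len d], assumption+)
  show ?thesis unfolding ip_def by (simp only: pz sum.neutral_const)
qed

lemma upt_filter:
  assumes "2 \<le> k"
  shows "filter (\<lambda>r. (r = 0 \<and> a) \<or> (r = k - 1 \<and> b)) [0..<k] = (if a then [0] else []) @ (if b then [k - 1] else [])"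
proof -
  obtain m where km: "k = Suc (Suc m)" using assms by (metis add_2_eq_Suc le_Suc_ex)
  have u1: "[0..<Suc (Suc m)] = [0..<Suc m] @ [Suc m]" by (rule upt_Suc_append) simp
  have u2: "[0..<Suc m] = 0 # [1..<Suc m]" by (simp add: upt_conv_Cons)
  have u: "[0..<k] = [0] @ [1..<k - 1] @ [k - 1]" unfolding km u1 u2 by simp
  have m: "filter (\<lambda>r. (r = 0 \<and> a) \<or> (r = k - 1 \<and> b)) [1..<k - 1] = []"
    by (auto simp: filter_empty_conv)
  show ?thesis unfolding u using assms by (simp only: filter_append m) auto
qed

lemma filt:
  assumes k: "2 \<le> k"
  shows "filter (\<lambda>p. fst p \<noteq> FI) (map (\<lambda>r. (cp \<tau> (qcfg k \<sigma> \<mu> s ! r), (site L (w + r), \<tau>))) [0..<k])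
    = (if \<sigma> = \<tau> then [(fs s, (site L w, \<tau>))] else []) @ (if \<mu> = \<tau> then [(fs s, (site L (w + (k - 1)), \<tau>))] else [])"
proof -
  have "filter (\<lambda>p. fst p \<noteq> FI) (map (\<lambda>r. (cp \<tau> (qcfg k \<sigma> \<mu> s ! r), (site L (w + r), \<tau>))) [0..<k])
     = map (\<lambda>r. (cp \<tau> (qcfg k \<sigma> \<mu> s ! r), (site L (w + r), \<tau>))) (filter (\<lambda>r. (r = 0 \<and> \<sigma> = \<tau>) \<or> (r = k - 1 \<and> \<mu> = \<tau>)) [0..<k])"
    unfolding filter_map o_def
    by (rule arg_cong[where f="map _"], rule filter_cong[OF refl]) (auto simp: qcfg_cp[OF k] fs_def)
  also have "\<dots> = (if \<sigma> = \<tau> then [(fs s, (site L w, \<tau>))] else []) @ (if \<mu> = \<tau> then [(fs s, (site L (w + (k - 1)), \<tau>))] else [])"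
    unfolding upt_filter[OF k] using k by (auto simp: qcfg_cp[OF k])
  finally show ?thesis .
qed

definition eps :: "bool \<Rightarrow> bool \<Rightarrow> complex" where "eps \<sigma> \<mu> = (if \<not> \<sigma> \<and> \<mu> then -1 else 1)"

lemma q_op:
  assumes k: "2 \<le> k"
  shows "belem L w (qcfg k \<sigma> \<mu> s) x y = eps \<sigma> \<mu> * opmult L (csop L s (site L w, \<sigma>)) (csop L s (site L (w + (k - 1)), \<mu>)) x y"
proof -
  have bl: "belist L w (qcfg k \<sigma> \<mu> s) = map (\<lambda>r. (cp True (qcfg k \<sigma> \<mu> s ! r), (site L (w + r), True))) [0..<k]
      @ map (\<lambda>r. (cp False (qcfg k \<sigma> \<mu> s ! r), (site L (w + r), False))) [0..<k]"
    unfolding belist_def cp_def qcfg_len[OF k] by simp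
  have "belem L w (qcfg k \<sigma> \<mu> s) = opl L (filter (\<lambda>p. fst p \<noteq> FI) (belist L w (qcfg k \<sigma> \<mu> s)))"
    unfolding belem_opl by (rule opl_filter)
  also have "\<dots> = opl L ((if \<sigma> then [(fs s, (site L w, True))] else []) @ (if \<mu> then [(fs s, (site L (w + (k - 1)), True))] else [])
       @ (if \<not> \<sigma> then [(fs s, (site L w, False))] else []) @ (if \<not> \<mu> then [(fs s, (site L (w + (k - 1)), False))] else []))"
    unfolding bl filter_append filt[OF k] by (cases \<sigma>; cases \<mu>; simp only: simp_thms if_True if_False append_assoc append_Nil)
  finally have e: "belem L w (qcfg k \<sigma> \<mu> s) = \<dots>" .
  show ?thesis
  proof (cases "\<not> \<sigma> \<and> \<mu>")
    case True
    then have "belem L w (qcfg k \<sigma> \<mu> s) = opmult L (csop L s (site L (w + (k - 1)), \<mu>)) (csop L s (site L w, \<sigma>))"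
      unfolding e csop_pair by simp
    moreover have "eps \<sigma> \<mu> = -1" using True by (simp add: eps_def)
    ultimately show ?thesis using csop_swap[of L s "(site L (w + (k - 1)), \<mu>)" "(site L w, \<sigma>)" x y] by simp
  next
    case False
    then have "belem L w (qcfg k \<sigma> \<mu> s) = opmult L (csop L s (site L w, \<sigma>)) (csop L s (site L (w + (k - 1)), \<mu>))"
      unfolding e csop_pair by (cases \<sigma>; cases \<mu>) simp_all
    moreover have "eps \<sigma> \<mu> = 1" using False by (simp add: eps_def)
    ultimately show ?thesis by simp
  qed
qed

lemma sum_bool_if: "(\<Sum>\<sigma>'\<in>(UNIV::bool set). if (a, \<sigma>') = (b, \<tau>) then f \<sigma>' else 0) = (if a = b then f \<tau> else (0::complex))"
  by (cases \<tau>) (simp_all add: UNIV_bool)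

lemma SL0:
  assumes L: "0 < L"
  shows "(\<Sum>j\<in>{1..L}. if site L j = site L c then G j else (0::complex)) = G (idx L c)"
  using idx_in[OF L, of c] site_idx[OF L]
  by (subst sum_single[where c="idx L c"]) auto

lemma site_idx_self: "0 < L \<Longrightarrow> site L (idx L c) = site L c"
  using site_idx idx_in by blast

lemma SL1:
  assumes L: "0 < L"
  shows "(\<Sum>j\<in>{1..L}. \<Sum>\<sigma>'\<in>(UNIV::bool set). if (site L j, \<sigma>') = (site L c, \<tau>) then G (site L (j + 1)) \<sigma>' else (0::complex))
       = G (site L (c + 1)) \<tau>"
proof -
  have "(\<Sum>j\<in>{1..L}. \<Sum>\<sigma>'\<in>(UNIV::bool set). if (site L j, \<sigma>') = (site L c, \<tau>) then G (site L (j + 1)) \<sigma>' else (0::complex))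
      = (\<Sum>j\<in>{1..L}. if site L j = site L c then G (site L (j + 1)) \<tau> else 0)"
    by (rule sum.cong[OF refl], rule sum_bool_if)
  also have "\<dots> = G (site L (idx L c + 1)) \<tau>" by (rule SL0[OF L])
  also have "site L (idx L c + 1) = site L (c + 1)" by (rule site_shift[OF site_idx_self[OF L]])
  finally show ?thesis .
qed

lemma SL2:
  assumes L: "0 < L"
  shows "(\<Sum>j\<in>{1..L}. \<Sum>\<sigma>'\<in>(UNIV::bool set). if (site L (j + 1), \<sigma>') = (site L c, \<tau>) then G (site L j) \<sigma>' else (0::complex))
       = G (site L (c + (L - 1))) \<tau>"
proof -
  have eqv: "(site L (j + 1) = site L c) = (site L j = site L (c + (L - 1)))" for j
  proof
    assume "site L (j + 1) = site L c"
    then have "site L (j + 1 + (L - 1)) = site L (c + (L - 1))" by (rule site_shift)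
    moreover have "site L (j + 1 + (L - 1)) = site L j" using L unfolding site_def by simp
    ultimately show "site L j = site L (c + (L - 1))" by simp
  next
    assume "site L j = site L (c + (L - 1))"
    then have "site L (j + 1) = site L (c + (L - 1) + 1)" by (rule site_shift)
    moreover have "site L (c + (L - 1) + 1) = site L c" using L unfolding site_def by simp
    ultimately show "site L (j + 1) = site L c" by simp
  qed
  have "(\<Sum>j\<in>{1..L}. \<Sum>\<sigma>'\<in>(UNIV::bool set). if (site L (j + 1), \<sigma>') = (site L c, \<tau>) then G (site L j) \<sigma>' else (0::complex))
      = (\<Sum>j\<in>{1..L}. if site L j = site L (c + (L - 1)) then G (site L j) \<tau> else 0)"
    by (rule sum.cong[OF refl], subst sum_bool_if, simp only: eqv)
  also have "\<dots> = G (site L (idx L (c + (L - 1)))) \<tau>" by (rule SL0[OF L])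
  also have "site L (idx L (c + (L - 1))) = site L (c + (L - 1))" by (rule site_idx_self[OF L])
  finally show ?thesis .
qed

definition diagop :: "op \<Rightarrow> bool" where "diagop M \<longleftrightarrow> (\<forall>x y. M x y \<noteq> 0 \<longrightarrow> x = y)"

lemma diag_numop: "diagop (numop L m)" unfolding diagop_def numop_eq by auto
lemma diag_idop: "diagop (idop L)" unfolding diagop_def idop_def by auto
lemma diag_opadd: assumes "diagop A" "diagop B" shows "diagop (opadd A B)"
  unfolding diagop_def
proof (intro allI impI)
  fix x y assume "opadd A B x y \<noteq> 0"
  then have "A x y \<noteq> 0 \<or> B x y \<noteq> 0" unfolding opadd_def by auto
  then show "x = y" using assms unfolding diagop_def by blast
qed
lemma diag_opsmult: assumes "diagop A" shows "diagop (opsmult c A)"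
  unfolding diagop_def
proof (intro allI impI)
  fix x y assume "opsmult c A x y \<noteq> 0"
  then have "A x y \<noteq> 0" unfolding opsmult_def by auto
  then show "x = y" using assms unfolding diagop_def by blast
qed
lemma diag_opmult: assumes "diagop A" "diagop B" shows "diagop (opmult L A B)"
  unfolding diagop_def
proof (intro allI impI)
  fix x y assume "opmult L A B x y \<noteq> 0"
  then obtain z where "A x z * B z y \<noteq> 0" unfolding opmult_def using sum_nonzero by blast
  then have "A x z \<noteq> 0" "B z y \<noteq> 0" by auto
  then show "x = y" using assms unfolding diagop_def by blast
qed

lemma diag_right: "diagop D \<Longrightarrow> opmult L F D x y = (if y \<in> states L then F x y * D y y else 0)"
  unfolding opmult_def diagop_def by (subst sum_single[where c=y]) (auto simp: finite_states)
lemma diag_left: "diagop D \<Longrightarrow> opmult L D F x y = (if x \<in> states L then D x x * F x y else 0)"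
  unfolding opmult_def diagop_def by (subst sum_single[where c=x]) (auto simp: finite_states)

lemma ip_diag_zero:
  assumes "diagop D" "\<And>x y. A x y * F x y = 0"
  shows "ip L A (opmult L F D) = 0" "ip L A (opmult L D F) = 0"
proof -
  have "A x y * opmult L F D x y = 0" for x y
  proof -
    have "A x y * opmult L F D x y = (A x y * F x y) * (if y \<in> states L then D y y else 0)"
      by (simp add: diag_right[OF assms(1)])
    then show ?thesis by (simp only: assms(2) mult_zero_left)
  qed
  then show "ip L A (opmult L F D) = 0" unfolding ip_def by (simp only: sum.neutral_const)
  have "A x y * opmult L D F x y = 0" for x y
  proof -
    have "A x y * opmult L D F x y = (A x y * F x y) * (if x \<in> states L then D x x else 0)"
      by (simp add: diag_left[OF assms(1)])
    then show ?thesis by (simp only: assms(2) mult_zero_left)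
  qed
  then show "ip L A (opmult L D F) = 0" unfolding ip_def by (simp only: sum.neutral_const)
qed

definition Dj :: "nat \<Rightarrow> nat \<Rightarrow> op" where
  "Dj L j = opmult L (opadd (numop L (site L j, True)) (opsmult (-1/2) (idop L)))
                     (opadd (numop L (site L j, False)) (opsmult (-1/2) (idop L)))"

definition hp1 :: "nat \<Rightarrow> nat \<Rightarrow> bool \<Rightarrow> op" where
  "hp1 L j \<sigma> = opmult L (cre L (site L j, \<sigma>)) (ann L (site L (j + 1), \<sigma>))"
definition hp2 :: "nat \<Rightarrow> nat \<Rightarrow> bool \<Rightarrow> op" where
  "hp2 L j \<sigma> = opmult L (cre L (site L (j + 1), \<sigma>)) (ann L (site L j, \<sigma>))"

lemma hub_expand: "hub L U = (\<lambda>x y. (-2) * (\<Sum>j\<in>{1..L}. \<Sum>\<sigma>\<in>(UNIV::bool set). hp1 L j \<sigma> x y + hp2 L j \<sigma> x y)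
    + (4 * complex_of_real U) * (\<Sum>j\<in>{1..L}. Dj L j x y))"
  by (intro ext) (simp only: hub_def hp1_def hp2_def Dj_def)

lemma diag_Dj: "diagop (Dj L j)"
  unfolding Dj_def by (intro diag_opmult diag_opadd diag_opsmult diag_numop diag_idop)

lemma ip_right_expand:
  "ip L A (opmult L F (\<lambda>x y. a * (\<Sum>j\<in>J. \<Sum>\<sigma>\<in>S. h1 j \<sigma> x y + h2 j \<sigma> x y) + b * (\<Sum>j\<in>J. D j x y)))
   = a * (\<Sum>j\<in>J. \<Sum>\<sigma>\<in>S. ip L A (opmult L F (h1 j \<sigma>)) + ip L A (opmult L F (h2 j \<sigma>)))
     + b * (\<Sum>j\<in>J. ip L A (opmult L F (D j)))"
  by (simp only: opmult_add_right_f opmult_scale_right_f opmult_sum_right_f ip_add ip_scale ip_sum)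

lemma ip_left_expand:
  "ip L A (opmult L (\<lambda>x y. a * (\<Sum>j\<in>J. \<Sum>\<sigma>\<in>S. h1 j \<sigma> x y + h2 j \<sigma> x y) + b * (\<Sum>j\<in>J. D j x y)) F)
   = a * (\<Sum>j\<in>J. \<Sum>\<sigma>\<in>S. ip L A (opmult L (h1 j \<sigma>) F) + ip L A (opmult L (h2 j \<sigma>) F))
     + b * (\<Sum>j\<in>J. ip L A (opmult L (D j) F))"
  by (simp only: opmult_add_left_f opmult_scale_left_f opmult_sum_left_f ip_add ip_scale ip_sum)

lemma ip_comm_term: "ip L A (opmult L F M) - ip L A (opmult L M F)
    = ip L (\<lambda>x y. opmult L A (optr M) x y - opmult L (optr M) A x y) F"
  unfolding ip_mult_right[of L A F M] ip_mult_left[of L A M F] ip_diff1 ..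

lemma optr_hop: "optr (opmult L (cre L a) (ann L b)) = opmult L (cre L b) (ann L a)"
  by (simp add: optr_opmult optr_cre optr_ann)

lemma comm_sum_zero:
  assumes comm: "opmult L F (hub L U) = opmult L (hub L U) F"
    and Az: "\<And>x y. A x y * F x y = 0"
  shows "(\<Sum>j\<in>{1..L}. \<Sum>\<sigma>\<in>(UNIV::bool set).
      (ip L A (opmult L F (hp1 L j \<sigma>)) - ip L A (opmult L (hp1 L j \<sigma>) F))
    + (ip L A (opmult L F (hp2 L j \<sigma>)) - ip L A (opmult L (hp2 L j \<sigma>) F))) = 0"
proof -
  have Dz: "ip L A (opmult L F (Dj L j)) = 0" "ip L A (opmult L (Dj L j) F) = 0" for j
    using ip_diag_zero[OF diag_Dj Az] by auto
  have "0 = ip L A (opmult L F (hub L U)) - ip L A (opmult L (hub L U) F)" using comm by simp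
  also have "\<dots> = (-2) * ((\<Sum>j\<in>{1..L}. \<Sum>\<sigma>\<in>(UNIV::bool set). ip L A (opmult L F (hp1 L j \<sigma>)) + ip L A (opmult L F (hp2 L j \<sigma>)))
      - (\<Sum>j\<in>{1..L}. \<Sum>\<sigma>\<in>(UNIV::bool set). ip L A (opmult L (hp1 L j \<sigma>) F) + ip L A (opmult L (hp2 L j \<sigma>) F)))"
    unfolding hub_expand ip_right_expand ip_left_expand Dz by (simp add: algebra_simps)
  also have "(\<Sum>j\<in>{1..L}. \<Sum>\<sigma>\<in>(UNIV::bool set). ip L A (opmult L F (hp1 L j \<sigma>)) + ip L A (opmult L F (hp2 L j \<sigma>)))
      - (\<Sum>j\<in>{1..L}. \<Sum>\<sigma>\<in>(UNIV::bool set). ip L A (opmult L (hp1 L j \<sigma>) F) + ip L A (opmult L (hp2 L j \<sigma>) F))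
    = (\<Sum>j\<in>{1..L}. \<Sum>\<sigma>\<in>(UNIV::bool set).
      (ip L A (opmult L F (hp1 L j \<sigma>)) - ip L A (opmult L (hp1 L j \<sigma>) F))
    + (ip L A (opmult L F (hp2 L j \<sigma>)) - ip L A (opmult L (hp2 L j \<sigma>) F)))"
    by (simp add: sum_subtractf[symmetric] algebra_simps)
  finally show ?thesis by simp
qed

lemma ip_swap: "ip L (opmult L (csop L s u) (csop L s v)) F = - ip L (opmult L (csop L s v) (csop L s u)) F"
  unfolding ip_def by (simp add: csop_swap[of L s u v] sum_negf)

lemma hopterm_cre: "a \<in> modes L \<Longrightarrow>
  ip L (\<lambda>x y. opmult L (opmult L (cre L P) (cre L R)) (opmult L (cre L b) (ann L a)) x y
             - opmult L (opmult L (cre L b) (ann L a)) (opmult L (cre L P) (cre L R)) x y) F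
  = (if a = R then ip L (opmult L (cre L b) (cre L P)) F else 0) - (if a = P then ip L (opmult L (cre L b) (cre L R)) F else 0)"
  by (simp only: comm_cre ip_diff1 ip_if1)

lemma hopterm_ann: "P \<in> modes L \<Longrightarrow> R \<in> modes L \<Longrightarrow>
  ip L (\<lambda>x y. opmult L (opmult L (ann L P) (ann L R)) (opmult L (cre L b) (ann L a)) x y
             - opmult L (opmult L (cre L b) (ann L a)) (opmult L (ann L P) (ann L R)) x y) F
  = (if b = R then ip L (opmult L (ann L P) (ann L a)) F else 0) - (if b = P then ip L (opmult L (ann L R) (ann L a)) F else 0)"
  by (simp only: comm_ann ip_diff1 ip_if1)

lemma site_modes: "0 < L \<Longrightarrow> (site L j, \<tau>) \<in> modes L"
  unfolding site_def modes_def by auto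

definition Tp :: "nat \<Rightarrow> nat \<Rightarrow> (nat \<Rightarrow> nat \<Rightarrow> (fac \<times> fac) list \<Rightarrow> complex) \<Rightarrow> bool \<Rightarrow> bool \<Rightarrow> bool \<Rightarrow> nat \<Rightarrow> complex" where
  "Tp L k coef s \<sigma> \<mu> v = ip L (opmult L (csop L s (site L v, \<sigma>)) (csop L s (site L (v + (k - 1)), \<mu>))) (Fk L k coef)"

lemma site_plusL: "site L (a + L) = site L a" unfolding site_def by simp

lemma step_rel:
  assumes k2: "2 \<le> k" and kL: "2 * k + 2 \<le> L"
    and comm: "opmult L (Fk L k coef) (hub L U) = opmult L (hub L U) (Fk L k coef)"
  shows "Tp L k coef s \<sigma> \<mu> w + Tp L k coef s \<sigma> \<mu> (w + 1) = 0"
proof -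
  define F where "F = Fk L k coef"
  define P where "P = (site L w, \<sigma>)"
  define R where "R = (site L (w + k), \<mu>)"
  define A where "A = opmult L (csop L s P) (csop L s R)"
  have L0: "0 < L" using kL by simp
  have Az: "A x y * F x y = 0" for x y
    unfolding A_def F_def P_def R_def
    by (rule Fk_zero) (rule far_zero[OF k2 kL cfgs_len], assumption+, simp_all)
  have S0: "(\<Sum>j\<in>{1..L}. \<Sum>\<sigma>'\<in>(UNIV::bool set).
      (ip L A (opmult L F (hp1 L j \<sigma>')) - ip L A (opmult L (hp1 L j \<sigma>') F))
    + (ip L A (opmult L F (hp2 L j \<sigma>')) - ip L A (opmult L (hp2 L j \<sigma>') F))) = 0"
    by (rule comm_sum_zero[OF comm[folded F_def] Az])
  have far1: "ip L (opmult L (csop L s (site L w, \<tau>1)) (csop L s (site L (w + (k + 1)), \<tau>2))) F = 0" for \<tau>1 \<tau>2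
    unfolding F_def by (rule far_zero_Fk[OF k2 kL]) simp_all
  have far2: "ip L (opmult L (csop L s (site L (w + (L - 1)), \<tau>1)) (csop L s (site L (w + k), \<tau>2))) F = 0" for \<tau>1 \<tau>2
  proof -
    have "site L (w + k) = site L (w + (L - 1) + (k + 1))"
      using L0 site_plusL[of L "w + k"] by (simp add: algebra_simps)
    then show ?thesis unfolding F_def using far_zero_Fk[OF k2 kL, where d="k + 1" and s=s and a="w + (L - 1)" and coef=coef] by simp
  qed
  have sQ: "site L (w + k + (L - 1)) = site L (w + (k - 1))"
    using L0 k2 site_plusL[of L "w + (k - 1)"] by (simp add: algebra_simps)
  have sR: "site L (w + 1 + (k - 1)) = site L (w + k)" using k2 by (simp add: algebra_simps)
  have sR1: "site L (w + k + 1) = site L (w + (k + 1))" by (simp add: algebra_simps)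
  show ?thesis
  proof (cases s)
    case True
    then have sT: "s = True" by simp
    define g1 where "g1 m = ip L (opmult L (cre L m) (cre L P)) F" for m
    define g2 where "g2 m = ip L (opmult L (cre L m) (cre L R)) F" for m
    have hterm: "(ip L A (opmult L F (hp1 L j \<sigma>')) - ip L A (opmult L (hp1 L j \<sigma>') F))
      + (ip L A (opmult L F (hp2 L j \<sigma>')) - ip L A (opmult L (hp2 L j \<sigma>') F))
      = ((if (site L j, \<sigma>') = R then g1 (site L (j + 1), \<sigma>') else 0) - (if (site L j, \<sigma>') = P then g2 (site L (j + 1), \<sigma>') else 0))
      + ((if (site L (j + 1), \<sigma>') = R then g1 (site L j, \<sigma>') else 0) - (if (site L (j + 1), \<sigma>') = P then g2 (site L j, \<sigma>') else 0))" for j \<sigma>'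
      unfolding ip_comm_term hp1_def hp2_def optr_hop A_def csop_def sT if_True g1_def g2_def
      by (simp only: hopterm_cre[OF site_modes[OF L0]])
    have "0 = (\<Sum>j\<in>{1..L}. \<Sum>\<sigma>'\<in>(UNIV::bool set). (if (site L j, \<sigma>') = (site L (w + k), \<mu>) then g1 (site L (j + 1), \<sigma>') else 0))
        - (\<Sum>j\<in>{1..L}. \<Sum>\<sigma>'\<in>(UNIV::bool set). (if (site L j, \<sigma>') = (site L w, \<sigma>) then g2 (site L (j + 1), \<sigma>') else 0))
        + ((\<Sum>j\<in>{1..L}. \<Sum>\<sigma>'\<in>(UNIV::bool set). (if (site L (j + 1), \<sigma>') = (site L (w + k), \<mu>) then g1 (site L j, \<sigma>') else 0))
        - (\<Sum>j\<in>{1..L}. \<Sum>\<sigma>'\<in>(UNIV::bool set). (if (site L (j + 1), \<sigma>') = (site L w, \<sigma>) then g2 (site L j, \<sigma>') else 0)))"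
      using S0 unfolding hterm P_def R_def by (simp only: sum.distrib sum_subtractf)
    also have "\<dots> = g1 (site L (w + k + 1), \<mu>) - g2 (site L (w + 1), \<sigma>)
        + (g1 (site L (w + k + (L - 1)), \<mu>) - g2 (site L (w + (L - 1)), \<sigma>))"
      using SL1[OF L0, of "w + k" \<mu> "\<lambda>a b. g1 (a, b)"] SL1[OF L0, of w \<sigma> "\<lambda>a b. g2 (a, b)"]
        SL2[OF L0, of "w + k" \<mu> "\<lambda>a b. g1 (a, b)"] SL2[OF L0, of w \<sigma> "\<lambda>a b. g2 (a, b)"]
      by simp
    also have "g1 (site L (w + k + 1), \<mu>) = 0"
    proof -
      have "g1 (site L (w + k + 1), \<mu>) = ip L (opmult L (csop L s (site L (w + (k + 1)), \<mu>)) (csop L s (site L w, \<sigma>))) F"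
        unfolding g1_def P_def sR1 csop_def sT by simp
      also have "\<dots> = - ip L (opmult L (csop L s (site L w, \<sigma>)) (csop L s (site L (w + (k + 1)), \<mu>))) F"
        by (rule ip_swap)
      finally show ?thesis using far1[of \<sigma> \<mu>] by simp
    qed
    also have "g2 (site L (w + (L - 1)), \<sigma>) = 0"
      unfolding g2_def R_def using far2[of \<sigma> \<mu>] unfolding csop_def sT by simp
    also have "g2 (site L (w + 1), \<sigma>) = Tp L k coef s \<sigma> \<mu> (w + 1)"
      unfolding g2_def R_def Tp_def F_def csop_def sT sR by simp
    also have "g1 (site L (w + k + (L - 1)), \<mu>) = - Tp L k coef s \<sigma> \<mu> w"
    proof -
      have "g1 (site L (w + k + (L - 1)), \<mu>) = ip L (opmult L (csop L s (site L (w + (k - 1)), \<mu>)) (csop L s (site L w, \<sigma>))) F"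
        unfolding g1_def P_def sQ csop_def sT by simp
      also have "\<dots> = - ip L (opmult L (csop L s (site L w, \<sigma>)) (csop L s (site L (w + (k - 1)), \<mu>))) F"
        by (rule ip_swap)
      finally show ?thesis unfolding Tp_def F_def .
    qed
    finally show ?thesis by (simp add: algebra_simps)
  next
    case False
    then have sF: "s = False" by simp
    define g1 where "g1 m = ip L (opmult L (ann L P) (ann L m)) F" for m
    define g2 where "g2 m = ip L (opmult L (ann L R) (ann L m)) F" for m
    have PRm: "P \<in> modes L" "R \<in> modes L" unfolding P_def R_def by (simp_all add: site_modes[OF L0])
    have hterm: "(ip L A (opmult L F (hp1 L j \<sigma>')) - ip L A (opmult L (hp1 L j \<sigma>') F))
      + (ip L A (opmult L F (hp2 L j \<sigma>')) - ip L A (opmult L (hp2 L j \<sigma>') F))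
      = ((if (site L (j + 1), \<sigma>') = R then g1 (site L j, \<sigma>') else 0) - (if (site L (j + 1), \<sigma>') = P then g2 (site L j, \<sigma>') else 0))
      + ((if (site L j, \<sigma>') = R then g1 (site L (j + 1), \<sigma>') else 0) - (if (site L j, \<sigma>') = P then g2 (site L (j + 1), \<sigma>') else 0))" for j \<sigma>'
      unfolding ip_comm_term hp1_def hp2_def optr_hop A_def csop_def sF if_False g1_def g2_def
      by (simp only: hopterm_ann[OF PRm])
    have "0 = (\<Sum>j\<in>{1..L}. \<Sum>\<sigma>'\<in>(UNIV::bool set). (if (site L (j + 1), \<sigma>') = (site L (w + k), \<mu>) then g1 (site L j, \<sigma>') else 0))
        - (\<Sum>j\<in>{1..L}. \<Sum>\<sigma>'\<in>(UNIV::bool set). (if (site L (j + 1), \<sigma>') = (site L w, \<sigma>) then g2 (site L j, \<sigma>') else 0))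
        + ((\<Sum>j\<in>{1..L}. \<Sum>\<sigma>'\<in>(UNIV::bool set). (if (site L j, \<sigma>') = (site L (w + k), \<mu>) then g1 (site L (j + 1), \<sigma>') else 0))
        - (\<Sum>j\<in>{1..L}. \<Sum>\<sigma>'\<in>(UNIV::bool set). (if (site L j, \<sigma>') = (site L w, \<sigma>) then g2 (site L (j + 1), \<sigma>') else 0)))"
      using S0 unfolding hterm P_def R_def by (simp only: sum.distrib sum_subtractf)
    also have "\<dots> = g1 (site L (w + k + (L - 1)), \<mu>) - g2 (site L (w + (L - 1)), \<sigma>)
        + (g1 (site L (w + k + 1), \<mu>) - g2 (site L (w + 1), \<sigma>))"
      using SL1[OF L0, of "w + k" \<mu> "\<lambda>a b. g1 (a, b)"] SL1[OF L0, of w \<sigma> "\<lambda>a b. g2 (a, b)"]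
        SL2[OF L0, of "w + k" \<mu> "\<lambda>a b. g1 (a, b)"] SL2[OF L0, of w \<sigma> "\<lambda>a b. g2 (a, b)"]
      by simp
    also have "g1 (site L (w + k + 1), \<mu>) = 0"
      unfolding g1_def P_def sR1 using far1[of \<sigma> \<mu>] unfolding csop_def sF by simp
    also have "g2 (site L (w + (L - 1)), \<sigma>) = 0"
    proof -
      have "g2 (site L (w + (L - 1)), \<sigma>) = ip L (opmult L (csop L s (site L (w + k), \<mu>)) (csop L s (site L (w + (L - 1)), \<sigma>))) F"
        unfolding g2_def R_def csop_def sF by simp
      also have "\<dots> = - ip L (opmult L (csop L s (site L (w + (L - 1)), \<sigma>)) (csop L s (site L (w + k), \<mu>))) F"
        by (rule ip_swap)
      finally show ?thesis using far2[of \<sigma> \<mu>] by simp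
    qed
    also have "g1 (site L (w + k + (L - 1)), \<mu>) = Tp L k coef s \<sigma> \<mu> w"
      unfolding g1_def P_def Tp_def F_def sQ csop_def sF by simp
    also have "g2 (site L (w + 1), \<sigma>) = - Tp L k coef s \<sigma> \<mu> (w + 1)"
    proof -
      have "g2 (site L (w + 1), \<sigma>) = ip L (opmult L (csop L s (site L (w + 1 + (k - 1)), \<mu>)) (csop L s (site L (w + 1), \<sigma>))) F"
        unfolding g2_def R_def csop_def sF sR by simp
      also have "\<dots> = - ip L (opmult L (csop L s (site L (w + 1), \<sigma>)) (csop L s (site L (w + 1 + (k - 1)), \<mu>))) F"
        by (rule ip_swap)
      finally show ?thesis unfolding Tp_def F_def .
    qed
    finally show ?thesis by (simp add: algebra_simps)
  qed
qed

lemma eps_sq: "eps \<sigma> \<mu> * eps \<sigma> \<mu> = 1" unfolding eps_def by simp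

lemma Tp_belem:
  assumes k2: "2 \<le> k" and kL: "2 * k + 2 \<le> L"
  shows "Tp L k coef s \<sigma> \<mu> v = eps \<sigma> \<mu> * 2 ^ (2 * L - 2) * coef k (idx L v) (qcfg k \<sigma> \<mu> s)"
proof -
  have "ip L (belem L v (qcfg k \<sigma> \<mu> s)) (Fk L k coef) = eps \<sigma> \<mu> * Tp L k coef s \<sigma> \<mu> v"
    unfolding Tp_def ip_def q_op[OF k2] by (simp add: sum_distrib_left mult.assoc)
  then have "eps \<sigma> \<mu> * ip L (belem L v (qcfg k \<sigma> \<mu> s)) (Fk L k coef) = Tp L k coef s \<sigma> \<mu> v"
    by (simp add: mult.assoc[symmetric] eps_sq)
  then show ?thesis using ip_Fk[OF k2 kL, of v \<sigma> \<mu> s coef] by (simp add: mult.assoc)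
qed

lemma alt:
  assumes k2: "2 \<le> k" and kL: "2 * k + 2 \<le> L"
    and comm: "opmult L (Fk L k coef) (hub L U) = opmult L (hub L U) (Fk L k coef)"
  shows "coef k (idx L (v + 1)) (qcfg k \<sigma> \<mu> s) = - coef k (idx L v) (qcfg k \<sigma> \<mu> s)"
proof -
  have "Tp L k coef s \<sigma> \<mu> v + Tp L k coef s \<sigma> \<mu> (v + 1) = 0" by (rule step_rel[OF k2 kL comm])
  then have "eps \<sigma> \<mu> * 2 ^ (2 * L - 2) * (coef k (idx L v) (qcfg k \<sigma> \<mu> s) + coef k (idx L (v + 1)) (qcfg k \<sigma> \<mu> s)) = 0"
    unfolding Tp_belem[OF k2 kL] by (simp add: algebra_simps)
  moreover have "eps \<sigma> \<mu> \<noteq> 0" unfolding eps_def by simp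
  ultimately have "coef k (idx L v) (qcfg k \<sigma> \<mu> s) + coef k (idx L (v + 1)) (qcfg k \<sigma> \<mu> s) = 0" by simp
  then show ?thesis by (simp add: eq_neg_iff_add_eq_0 add.commute)
qed

lemma idx_self: "i \<in> {1..L} \<Longrightarrow> idx L i = i"
  unfolding idx_def by (cases "i = L") auto

theorem lemma6:
  fixes L k :: nat and U :: real
    and coef :: "nat \<Rightarrow> nat \<Rightarrow> (fac \<times> fac) list \<Rightarrow> complex"
  assumes "U \<noteq> 0" and "2 \<le> k" and "k < L div 2"
    and "opmult L (Fk L k coef) (hub L U) = opmult L (hub L U) (Fk L k coef)"
    and "\<exists>i\<in>{1..L}. \<exists>cfg\<in>cfgs k. coef k i cfg \<noteq> 0"
  shows "\<forall>\<sigma> \<mu> s.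
           (odd L \<longrightarrow> (\<forall>i\<in>{1..L}. coef k i (qcfg k \<sigma> \<mu> s) = 0)) \<and>
           (even L \<longrightarrow> (\<exists>d. \<forall>i\<in>{1..L}. coef k i (qcfg k \<sigma> \<mu> s) = d * (-1) ^ i))"
proof (intro allI)
  fix \<sigma> \<mu> s
  have k2: "2 \<le> k" using assms(2) .
  have kL: "2 * k + 2 \<le> L" using assms(3) by linarith
  have L0: "0 < L" using kL by simp
  define d where "d v = coef k (idx L v) (qcfg k \<sigma> \<mu> s)" for v
  have rec: "d (v + 1) = - d v" for v unfolding d_def by (rule alt[OF k2 kL assms(4)])
  have pw: "d (1 + n) = (-1) ^ n * d 1" for n
  proof (induction n)
    case 0
    then show ?case by simp
  next
    case (Suc n)
    have "d (1 + Suc n) = d ((1 + n) + 1)" by simp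
    also have "\<dots> = - d (1 + n)" by (rule rec)
    finally show ?case using Suc.IH by simp
  qed
  have pw': "d i = (-1) ^ (i - 1) * d 1" if "1 \<le> i" for i
    using pw[of "i - 1"] that by simp
  have cyc: "d (L + 1) = d 1"
  proof -
    have "(L + 1) mod L = 1 mod L" by (rule mod_add_self1)
    then have "idx L (L + 1) = idx L 1" unfolding idx_def by (simp only:)
    then show ?thesis unfolding d_def by simp
  qed
  have d1: "d 1 = (-1) ^ L * d 1" using cyc pw[of L] by (simp add: add.commute)
  have ci: "coef k i (qcfg k \<sigma> \<mu> s) = d i" if "i \<in> {1..L}" for i
    unfolding d_def idx_self[OF that] ..
  show "(odd L \<longrightarrow> (\<forall>i\<in>{1..L}. coef k i (qcfg k \<sigma> \<mu> s) = 0)) \<and>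
           (even L \<longrightarrow> (\<exists>d. \<forall>i\<in>{1..L}. coef k i (qcfg k \<sigma> \<mu> s) = d * (-1) ^ i))"
  proof (intro conjI impI)
    assume "odd L"
    then have "d 1 = - d 1" using d1 by simp
    then have "d 1 = 0" by simp
    show "\<forall>i\<in>{1..L}. coef k i (qcfg k \<sigma> \<mu> s) = 0"
    proof
      fix i assume i: "i \<in> {1..L}"
      then have "1 \<le> i" by simp
      then show "coef k i (qcfg k \<sigma> \<mu> s) = 0" unfolding ci[OF i] pw'[OF \<open>1 \<le> i\<close>] \<open>d 1 = 0\<close> by simp
    qed
  next
    assume "even L"
    show "\<exists>d'. \<forall>i\<in>{1..L}. coef k i (qcfg k \<sigma> \<mu> s) = d' * (-1) ^ i"
    proof (intro exI ballI)
      fix i assume i: "i \<in> {1..L}"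
      then have "1 \<le> i" by simp
      then have "(-1::complex) ^ i = - ((-1) ^ (i - 1))"
        by (metis le_add_diff_inverse power_add power_one_right mult.commute mult_minus1 add.commute)
      then show "coef k i (qcfg k \<sigma> \<mu> s) = (- d 1) * (-1) ^ i" using ci[OF i] pw'[OF \<open>1 \<le> i\<close>] by simp
    qed
  qed
qed


end
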